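(* Assume (H1)–(H3) and (A1): the $r\times r$ matrices $(q_u,q_v)A_\pm^{-1}\binom{0}{I_r}$ have distinct eigenvalues. Then for $|\lambda|$ sufficiently small the constant-coefficient equation $-A_\pm W'+(Q_\pm-\lambda)W=0$ has a basis of $N=n+r$ solutions $e^{\mu_j^\pm(\lambda)x}V_j^\pm(\lambda)$ with $\mu_j^\pm,V_j^\pm$ analytic in $\lambda$, consisting of $r$ fast modes $$\mu_j^\pm=\gamma_j^\pm+O(\lambda),\qquad V_j^\pm=A_\pm^{-1}S_j^\pm+O(\lambda),\qquad S_j^\pm=\binom{0}{s_j^\pm},$$ where $\gamma_j^\pm\ (\ne0)$ and $s_j^\pm$ are the eigenvalues and right eigenvectors of $(q_u,q_v)A_\pm^{-1}\binom{0}{I_r}$, and $n$ slow modes $$\mu_{r+j}^\pm=-\frac{\lambda}{a_j^{*\pm}}+\frac{\lambda^2\beta_j^{*\pm}}{(a_j^{*\pm})^3}+O(\lambda^3),\qquad V_{r+j}^\pm=R_j^{*\pm}+O(\lambda),\qquad j=1,\dots,n.$$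
   Context: Relaxation system $\partial_t\binom uv+\partial_x\binom{f(u,v)}{g(u,v)}=\binom{0}{q(u,v)}$, $u\in\mathbb R^n$, $v\in\mathbb R^r$, $N=n+r$, with equilibrium manifold $v=v^*(u)$, $q(u,v^*(u))\equiv0$, $\mathrm{Re}\,\sigma(q_v)<0$, equilibrium flux $f^*(u)=f(u,v^*(u))$; profile speed normalized to $0$. $A(u,v):=\begin{pmatrix} f_u&f_v\\ g_u&g_v\end{pmatrix}$, $Q(u,v):=\begin{pmatrix}0&0\\ q_u&q_v\end{pmatrix}$, $A_\pm,Q_\pm$ their values at the endstates $(u_\pm,v_\pm)$. (H1) eigenvalues of $A$ real, semisimple, constant multiplicity, nonzero. (H2) $df^*(u_\pm)$ has real, distinct, nonzero eigenvalues $a_j^{*\pm}$ with right/left eigenvectors $r_j^{*\pm},l_j^{*\pm}$, $l_j^{*t}r_k^*=\delta_{jk}$. (H3) $\exists\theta>0$: $\mathrm{Re}\,\sigma(i\xi A_\pm+Q_\pm)\le-\theta|\xi|^2/(1+|\xi|^2)$. Define $R_j^{*\pm}:=\binom{r_j^{*\pm}}{-q_v^{-1}q_ur_j^{*\pm}}$, the Chapman–Enskog viscosity $B^*:=-f_vq_v^{-1}\big(g_u-g_vq_v^{-1}q_u+q_v^{-1}q_u\,df^*\big)$ evaluated at $(u_\pm,v_\pm)$ (with $df^*=f_u-f_vq_v^{-1}q_u$), and $\beta_j^{*\pm}:=l_j^{*\pm t}B^*_\pm r_j^{*\pm}$. *)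

theory Defs
  imports "HOL-Analysis.Analysis" "HOL-Library.Landau_Symbols"
begin

definition cmat :: "real^'c^'b \<Rightarrow> complex^'c^'b" where
  "cmat M = (\<chi> i j. complex_of_real (M $ i $ j))"

definition cvec :: "real^'b \<Rightarrow> complex^'b" where
  "cvec v = (\<chi> i. complex_of_real (v $ i))"

definition eigvals :: "complex^'b^'b \<Rightarrow> complex set" where
  "eigvals M = {\<sigma>. \<exists>v. v \<noteq> 0 \<and> M *v v = \<sigma> *s v}"

definition semisimple :: "complex^'b^'b \<Rightarrow> bool" where
  "semisimple M \<longleftrightarrow> (\<exists>P::complex^'b^'b. invertible P \<and>
      (\<exists>d. matrix_inv P ** M ** P = (\<chi> i j. if i = j then d i else 0)))"

text \<open>Block matrix with rows/columns indexed by u-components (Inl) then v-components (Inr).\<close>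
definition blk :: "'a^'n::finite^'n \<Rightarrow> 'a^'r^'n \<Rightarrow> 'a^'n^'r \<Rightarrow> 'a^'r^'r \<Rightarrow> 'a^('n+'r)^('n+'r)" where
  "blk P11 P12 P21 P22 = (\<chi> i j. case i of
      Inl a \<Rightarrow> (case j of Inl b \<Rightarrow> P11 $ a $ b | Inr b \<Rightarrow> P12 $ a $ b)
    | Inr a \<Rightarrow> (case j of Inl b \<Rightarrow> P21 $ a $ b | Inr b \<Rightarrow> P22 $ a $ b))"

definition stack :: "'a^'n::finite \<Rightarrow> 'a^'r::finite \<Rightarrow> 'a^('n+'r)" where
  "stack x y = (\<chi> i. case i of Inl a \<Rightarrow> x $ a | Inr b \<Rightarrow> y $ b)"

text \<open>The r x N matrix (q_u, q_v) and the N x r matrix (0; I_r).\<close>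
definition rowblk :: "'a^'n^'r \<Rightarrow> 'a^'r^'r \<Rightarrow> 'a^('n+'r)^'r" where
  "rowblk P1 P2 = (\<chi> i j. case j of Inl b \<Rightarrow> P1 $ i $ b | Inr b \<Rightarrow> P2 $ i $ b)"

definition embI :: "'a::zero_neq_one^'r::finite^('n::finite+'r)" where
  "embI = (\<chi> i j. case i of Inl a \<Rightarrow> 0 | Inr b \<Rightarrow> (if b = j then 1 else 0))"

definition dfstar :: "real^'n^'n \<Rightarrow> real^'r^'n \<Rightarrow> real^'n^'r \<Rightarrow> real^'r^'r \<Rightarrow> real^'n^'n" where
  "dfstar fu fv qu qv = fu - fv ** matrix_inv qv ** qu"

definition Bstar :: "real^'n^'n \<Rightarrow> real^'r^'n \<Rightarrow> real^'n^'r \<Rightarrow> real^'r^'r \<Rightarrow>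
    real^'n^'r \<Rightarrow> real^'r^'r \<Rightarrow> real^'n^'n" where
  "Bstar fu fv gu gv qu qv =
     - (fv ** matrix_inv qv ** (gu - gv ** matrix_inv qv ** qu
                                 + matrix_inv qv ** qu ** dfstar fu fv qu qv))"

definition odesols :: "complex^('n::finite+'r::finite)^('n+'r) \<Rightarrow> complex^('n+'r)^('n+'r) \<Rightarrow> complex
    \<Rightarrow> (real \<Rightarrow> complex^('n+'r)) set" where
  "odesols A Q lam = {W. \<forall>x. \<exists>D. (W has_vector_derivative D) (at x) \<and>
       - (A *v D) + (Q *v W x - lam *s W x) = 0}"

end

theory Submission
  imports Defs "HOL-Complex_Analysis.Complex_Analysis"
begin

no_notation fps_nth (infixl \<open>$\<close> 75)


lemma norm_smult_cvec: "norm ((c::complex) *s (x::complex^'m)) = norm c * norm x"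
  unfolding norm_vec_def
  by (simp add: L2_set_right_distrib norm_mult)

lemma norm_le_sum_cvec: "norm (x::complex^'m) \<le> (\<Sum>i\<in>UNIV. norm (x $ i))"
  unfolding norm_vec_def by (rule L2_set_le_sum) simp

lemma contraction_holo:
  fixes c :: "complex^'m" and E :: "complex \<Rightarrow> complex^'m \<Rightarrow> complex^'m" and K :: real
  assumes E0: "\<And>z. E z 0 = 0"
    and Lip: "\<And>z y y'. norm z \<le> 1 \<Longrightarrow> norm y \<le> 1 \<Longrightarrow> norm y' \<le> 1 \<Longrightarrow>
          norm (E z y - E z y') \<le> K * (norm z + norm y + norm y') * norm (y - y')"
    and hol: "\<And>y S i. open S \<Longrightarrow> (\<And>i. (\<lambda>z. y z $ i) holomorphic_on S) \<Longrightarrow>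
          (\<lambda>z. E z (y z) $ i) holomorphic_on S"
    and K: "K \<ge> 0"
  shows "\<exists>\<epsilon>>0. \<exists>Y C. (\<forall>i. (\<lambda>z. Y z $ i) holomorphic_on ball 0 \<epsilon>) \<and>
           (\<forall>z\<in>ball 0 \<epsilon>. Y z = z *s c + E z (Y z)) \<and>
           (\<forall>z\<in>ball 0 \<epsilon>. norm (Y z - z *s c) \<le> C * (norm z)^2)"
proof -
  define b where "b = norm c + 1"
  have b1: "b \<ge> 1" unfolding b_def by simp
  define e0 where "e0 = min (1/(2*b)) (1/(2*K*(1+4*b)+1))"
  have e0pos: "e0 > 0" unfolding e0_def using b1 K by (auto intro!: divide_pos_pos add_nonneg_pos)
  have e0a: "e0 \<le> 1/(2*b)" unfolding e0_def by simp
  have e0b: "e0 \<le> 1/(2*K*(1+4*b)+1)" unfolding e0_def by simp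
  define d where "d = 2 * e0 * b"
  have dpos: "d > 0" unfolding d_def using e0pos b1 by simp
  have d1: "d \<le> 1" using e0a b1 unfolding d_def by (simp add: field_simps)
  have "e0 * 1 \<le> e0 * b" using b1 e0pos by (intro mult_left_mono) auto
  then have e01: "e0 \<le> 1/2" using d1 unfolding d_def by simp
  have Kc: "K * (e0 + 2*d) \<le> 1/2"
  proof -
    have "K * (e0 + 2*d) = (K * (1+4*b)) * e0" unfolding d_def by (simp add: algebra_simps)
    also have "\<dots> \<le> (K * (1+4*b)) * (1/(2*K*(1+4*b)+1))"
      using e0b K b1 by (intro mult_left_mono) auto
    also have "\<dots> \<le> 1/2"
    proof -
      have t: "K * (1+4*b) \<ge> 0" using K b1 by simp
      have "2*K*(1+4*b)+1 = 2*(K*(1+4*b))+1" by simp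
      then show ?thesis using t by (simp add: field_simps)
    qed
    finally show ?thesis .
  qed
  define T where "T = (\<lambda>z y. z *s c + E z y)"
  have Tlip: "norm (T z y - T z y') \<le> 1/2 * norm (y - y')"
    if "norm z \<le> e0" "norm y \<le> d" "norm y' \<le> d" for z y y'
  proof -
    have "norm (T z y - T z y') = norm (E z y - E z y')" unfolding T_def by (simp add: algebra_simps)
    also have "\<dots> \<le> K * (norm z + norm y + norm y') * norm (y - y')"
      using that e01 d1 by (intro Lip) auto
    also have "\<dots> \<le> K * (e0 + 2*d) * norm (y - y')"
      using that K by (intro mult_right_mono mult_left_mono) auto
    also have "\<dots> \<le> 1/2 * norm (y - y')" using Kc by (intro mult_right_mono) auto
    finally show ?thesis .
  qed
  have Tbd: "norm (T z y) \<le> d" if "norm z \<le> e0" "norm y \<le> d" for z y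
  proof -
    have "T z y = z *s c + (T z y - T z 0)" unfolding T_def using E0 by simp
    then have "norm (T z y) \<le> norm z * norm c + norm (T z y - T z 0)"
      by (metis norm_smult_cvec norm_triangle_ineq)
    also have "\<dots> \<le> e0 * b + 1/2 * norm (y - 0)"
      using that Tlip[of z y 0] dpos e0pos unfolding b_def
      by (intro add_mono mult_mono) auto
    also have "\<dots> \<le> d" using that unfolding d_def by (simp add: algebra_simps)
    finally show ?thesis .
  qed
  define yk where "yk = (\<lambda>k z. (T z ^^ k) 0)"
  have yk0: "yk 0 z = 0" for z unfolding yk_def by simp
  have ykS: "yk (Suc k) z = T z (yk k z)" for k z unfolding yk_def by simp
  have ykbd: "norm (yk k z) \<le> d" if "norm z \<le> e0" for k z
    using that by (induction k) (auto simp: yk0 ykS dpos less_imp_le intro: Tbd)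
  have ykdiff: "norm (yk (Suc k) z - yk k z) \<le> d * (1/2)^k" if "norm z \<le> e0" for k z
  proof (induction k)
    case 0 then show ?case using Tbd[OF that, of 0] dpos by (simp add: yk0 ykS)
  next
    case (Suc k)
    have "norm (yk (Suc (Suc k)) z - yk (Suc k) z) \<le> 1/2 * norm (yk (Suc k) z - yk k z)"
      unfolding ykS[of "Suc k"] ykS[of k] using that ykbd[OF that]
      by (metis Tlip ykS)
    also have "\<dots> \<le> 1/2 * (d * (1/2)^k)" using Suc by simp
    finally show ?case by simp
  qed
  have ykhol: "(\<lambda>z. yk k z $ i) holomorphic_on ball 0 e0" for k i
  proof (induction k arbitrary: i)
    case 0 then show ?case by (simp add: yk0)
  next
    case (Suc k)
    have "(\<lambda>z. E z (yk k z) $ i) holomorphic_on ball 0 e0"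
      by (rule hol) (auto intro: Suc)
    then show ?case unfolding ykS T_def
      by (auto intro!: holomorphic_intros)
  qed
  define e where "e = e0 / 2"
  have epos: "e > 0" using e0pos unfolding e_def by simp
  have cb: "cball 0 e \<subseteq> ball (0::complex) e0" using e0pos unfolding e_def by auto
  define Y where "Y = (\<lambda>z. \<chi> i. suminf (\<lambda>j. (yk (Suc j) z - yk j z) $ i))"
  have tele: "yk k z = (\<Sum>j<k. yk (Suc j) z - yk j z)" for k z
    using sum_lessThan_telescope[of "\<lambda>j. yk j z" k] by (simp add: yk0)
  have ulim: "uniform_limit (cball 0 e) (\<lambda>k z. yk k z $ i) (\<lambda>z. Y z $ i) sequentially" for i
  proof -
    have "uniform_limit (cball 0 e) (\<lambda>k z. \<Sum>j<k. (yk (Suc j) z - yk j z) $ i)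
            (\<lambda>z. suminf (\<lambda>j. (yk (Suc j) z - yk j z) $ i)) sequentially"
    proof (rule Weierstrass_m_test)
      fix n z assume "z \<in> cball (0::complex) e"
      then have "norm z \<le> e0" using e0pos unfolding e_def by auto
      then show "norm ((yk (Suc n) z - yk n z) $ i) \<le> d * (1/2)^n"
        using order_trans[OF Finite_Cartesian_Product.norm_nth_le ykdiff[OF \<open>norm z \<le> e0\<close>]] by simp
    next
      show "summable (\<lambda>n. d * (1/2::real)^n)" by simp
    qed
    moreover have "(\<lambda>k z. \<Sum>j<k. (yk (Suc j) z - yk j z) $ i) = (\<lambda>k z. yk k z $ i)"
    proof (intro ext)
      fix k z
      have "yk k z $ i = (\<Sum>j<k. yk (Suc j) z - yk j z) $ i" by (rule arg_cong[where f="\<lambda>v. v $ i"]) (rule tele)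
      then show "(\<Sum>j<k. (yk (Suc j) z - yk j z) $ i) = yk k z $ i" by (simp add: sum_component)
    qed
    ultimately show ?thesis unfolding Y_def by simp
  qed
  have Yhol: "(\<lambda>z. Y z $ i) holomorphic_on ball 0 e" for i
  proof -
    have "eventually (\<lambda>k. continuous_on (cball 0 e) (\<lambda>z. yk k z $ i) \<and>
            (\<lambda>z. yk k z $ i) holomorphic_on ball 0 e) sequentially"
    proof (intro always_eventually allI conjI)
      fix k
      show "(\<lambda>z. yk k z $ i) holomorphic_on ball 0 e"
        by (rule holomorphic_on_subset[OF ykhol]) (use cb in auto)
      show "continuous_on (cball 0 e) (\<lambda>z. yk k z $ i)"
        by (rule holomorphic_on_imp_continuous_on, rule holomorphic_on_subset[OF ykhol]) (use cb in auto)
    qed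
    from holomorphic_uniform_limit[OF this ulim[of i]] show ?thesis by auto
  qed
  have Ylim: "(\<lambda>k. yk k z) \<longlonglongrightarrow> Y z" if "z \<in> cball 0 e" for z
    by (rule vec_tendstoI) (rule tendsto_uniform_limitI[OF ulim that])
  have zle: "norm z \<le> e0" if "z \<in> ball 0 e" for z using that e0pos unfolding e_def by auto
  have Ybd: "norm (Y z) \<le> d" if "z \<in> ball 0 e" for z
  proof -
    have "(\<lambda>k. norm (yk k z)) \<longlonglongrightarrow> norm (Y z)" using Ylim that by (intro tendsto_norm) auto
    then show ?thesis using ykbd zle[OF that] by (intro LIMSEQ_le_const2) auto
  qed
  have Yfix: "Y z = T z (Y z)" if "z \<in> ball 0 e" for z
  proof -
    have l1: "(\<lambda>k. yk (Suc k) z) \<longlonglongrightarrow> Y z" using Ylim[of z] that by (intro LIMSEQ_Suc) auto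
    have "(\<lambda>k. T z (yk k z) - T z (Y z)) \<longlonglongrightarrow> 0"
    proof (rule Lim_null_comparison)
      show "\<forall>\<^sub>F k in sequentially. norm (T z (yk k z) - T z (Y z)) \<le> 1/2 * norm (yk k z - Y z)"
        using Tlip zle[OF that] ykbd Ybd[OF that] by (intro always_eventually allI) auto
      have "(\<lambda>k. yk k z - Y z) \<longlonglongrightarrow> 0" using Ylim[of z] that
        by (simp add: LIM_zero)
      then show "(\<lambda>k. 1/2 * norm (yk k z - Y z)) \<longlonglongrightarrow> 0"
        by (simp add: tendsto_mult_right_zero tendsto_norm_zero)
    qed
    then have "(\<lambda>k. yk (Suc k) z) \<longlonglongrightarrow> T z (Y z)" unfolding ykS by (simp add: LIM_zero_iff)
    with l1 show ?thesis by (rule LIMSEQ_unique)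
  qed
  define C where "C = 2 * K * (1 + 2 * norm c) * norm c"
  have Ysmall: "norm (Y z - z *s c) \<le> C * (norm z)^2" if "z \<in> ball 0 e" for z
  proof -
    have Ez: "Y z - z *s c = E z (Y z)" using Yfix[OF that] unfolding T_def by (simp add: algebra_simps)
    have Elip: "norm (E z (Y z)) \<le> K * (norm z + norm (Y z)) * norm (Y z)"
      using Lip[of z "Y z" 0] E0 zle[OF that] Ybd[OF that] e01 d1 by simp
    have "K * (norm z + norm (Y z)) \<le> K * (e0 + 2*d)"
      using zle[OF that] Ybd[OF that] K dpos by (intro mult_left_mono) auto
    then have "K * (norm z + norm (Y z)) \<le> 1/2" using Kc by simp
    then have Eh: "norm (E z (Y z)) \<le> 1/2 * norm (Y z)"
      using Elip by (meson mult_right_mono norm_ge_zero order_trans)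
    have "norm (Y z) \<le> norm (z *s c) + norm (Y z - z *s c)" by (metis norm_triangle_sub add.commute)
    then have "norm (Y z) \<le> norm z * norm c + 1/2 * norm (Y z)" using Ez Eh by (simp add: norm_smult_cvec)
    then have Yb: "norm (Y z) \<le> 2 * norm z * norm c" by simp
    have h1: "K * (norm z + norm (Y z)) \<le> K * (norm z + 2 * norm z * norm c)"
      using Yb K by (intro mult_left_mono) auto
    have h2: "K * (norm z + norm (Y z)) * norm (Y z) \<le> K * (norm z + 2 * norm z * norm c) * (2 * norm z * norm c)"
      by (rule mult_mono[OF h1 Yb]) (use K in auto)
    have "norm (E z (Y z)) \<le> K * (norm z + 2 * norm z * norm c) * (2 * norm z * norm c)"
      using Elip h2 by linarith
    also have "\<dots> = C * (norm z)^2" unfolding C_def by (simp add: algebra_simps power2_eq_square)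
    finally show ?thesis using Ez by simp
  qed
  have Yfix': "\<forall>z\<in>ball 0 e. Y z = z *s c + E z (Y z)" using Yfix unfolding T_def by blast
  show ?thesis
    apply (rule exI[of _ e])
    apply (rule conjI[OF epos])
    apply (rule exI[of _ Y])
    apply (rule exI[of _ C])
    using Yhol Yfix' Ysmall by blast
qed


definition clin :: "(complex^'a \<Rightarrow> complex^'b) \<Rightarrow> bool" where
  "clin f \<longleftrightarrow> (\<forall>x y. f (x + y) = f x + f y) \<and> (\<forall>c x. f (c *s x) = c *s f x)"

definition cbil :: "(complex^'a \<Rightarrow> complex^'b \<Rightarrow> complex^'c) \<Rightarrow> bool" where
  "cbil B \<longleftrightarrow> (\<forall>y. clin (\<lambda>x. B x y)) \<and> (\<forall>x. clin (B x))"

lemma clinI: "(\<And>x y. f (x + y) = f x + f y) \<Longrightarrow> (\<And>c x. f (c *s x) = c *s f x) \<Longrightarrow> clin f"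
  unfolding clin_def by blast

lemma cbilI: "(\<And>y. clin (\<lambda>x. B x y)) \<Longrightarrow> (\<And>x. clin (B x)) \<Longrightarrow> cbil B"
  unfolding cbil_def by blast

lemma clin_add: "clin f \<Longrightarrow> f (x + y) = f x + f y" unfolding clin_def by blast
lemma clin_scale: "clin f \<Longrightarrow> f (c *s x) = c *s f x" unfolding clin_def by blast
lemma clin_zero: "clin f \<Longrightarrow> f 0 = 0"
  using clin_scale[of f 0 0] by simp
lemma cvec_neg1: "(-1::complex) *s x = - x" by (simp add: vec_eq_iff)
lemma clin_neg: "clin f \<Longrightarrow> f (- x) = - f x"
  using clin_scale[of f "-1" x] by (simp add: cvec_neg1)
lemma clin_diff: "clin f \<Longrightarrow> f (x - y) = f x - f y"
  using clin_add[of f x "-y"] clin_neg[of f y] by simp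
lemma clin_sum: "clin f \<Longrightarrow> f (sum g A) = (\<Sum>a\<in>A. f (g a))"
proof (induction A rule: infinite_finite_induct)
  case (infinite A) then show ?case by (simp add: clin_zero)
next
  case empty then show ?case by (simp add: clin_zero)
next
  case (insert x F) then show ?case by (simp add: clin_add)
qed

lemma clin_expand: "clin f \<Longrightarrow> f x = (\<Sum>k\<in>UNIV. x $ k *s f (axis k 1))"
proof -
  assume f: "clin f"
  have "f x = f (\<Sum>k\<in>UNIV. x $ k *s axis k 1)" by (simp add: basis_expansion)
  also have "\<dots> = (\<Sum>k\<in>UNIV. x $ k *s f (axis k 1))" by (simp add: clin_sum[OF f] clin_scale[OF f])
  finally show ?thesis .
qed

lemma clin_comp: "clin f \<Longrightarrow> f x $ i = (\<Sum>k\<in>UNIV. x $ k * f (axis k 1) $ i)"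
proof -
  assume f: "clin f"
  have "f x $ i = (\<Sum>k\<in>UNIV. x $ k *s f (axis k 1)) $ i"
    by (rule arg_cong[where f="\<lambda>v. v $ i"]) (rule clin_expand[OF f])
  then show ?thesis by (simp add: sum_component)
qed

lemma cvec_sum_bound:
  "norm (\<Sum>k\<in>UNIV. (x::complex^'a) $ k *s (v k :: complex^'b)) \<le> norm x * (\<Sum>k\<in>UNIV. norm (v k))"
proof -
  have "norm (\<Sum>k\<in>UNIV. x $ k *s v k) \<le> (\<Sum>k\<in>UNIV. norm (x $ k *s v k))" by (rule norm_sum)
  also have "\<dots> = (\<Sum>k\<in>UNIV. norm (x $ k) * norm (v k))" by (simp add: norm_smult_cvec)
  also have "\<dots> \<le> (\<Sum>k\<in>UNIV. norm x * norm (v k))"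
    by (intro sum_mono mult_right_mono Finite_Cartesian_Product.norm_nth_le) auto
  also have "\<dots> = norm x * (\<Sum>k\<in>UNIV. norm (v k))" by (simp add: sum_distrib_left)
  finally show ?thesis .
qed

lemma clin_bound: "clin f \<Longrightarrow> \<exists>K\<ge>0. \<forall>x. norm (f x) \<le> K * norm x"
proof -
  assume f: "clin f"
  define K where "K = (\<Sum>k\<in>UNIV. norm (f (axis k 1)))"
  have "norm (f x) \<le> K * norm x" for x
  proof -
    have "norm (f x) \<le> norm x * K" unfolding K_def clin_expand[OF f, of x] by (rule cvec_sum_bound)
    then show ?thesis by (simp add: mult.commute)
  qed
  moreover have "K \<ge> 0" unfolding K_def by (intro sum_nonneg) auto
  ultimately show ?thesis by blast
qed

lemma clin_hol:
  fixes y :: "complex \<Rightarrow> complex^'a"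
  assumes f: "clin f" and y: "\<And>i. (\<lambda>z. y z $ i) holomorphic_on S"
  shows "(\<lambda>z. f (y z) $ i) holomorphic_on S"
proof -
  have "(\<lambda>z. f (y z) $ i) = (\<lambda>z. \<Sum>k\<in>UNIV. y z $ k * f (axis k 1) $ i)"
    by (rule ext) (rule clin_comp[OF f])
  then show ?thesis by (simp only:) (intro holomorphic_intros y)
qed

lemma cbil_clin1: "cbil B \<Longrightarrow> clin (\<lambda>x. B x y)" unfolding cbil_def by blast
lemma cbil_clin2: "cbil B \<Longrightarrow> clin (B x)" unfolding cbil_def by blast

lemma cbil_expand: "cbil B \<Longrightarrow> B x y = (\<Sum>k\<in>UNIV. x $ k *s (\<Sum>l\<in>UNIV. y $ l *s B (axis k 1) (axis l 1)))"
proof -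
  assume B: "cbil B"
  have "B x y = (\<Sum>k\<in>UNIV. x $ k *s B (axis k 1) y)" using clin_expand[OF cbil_clin1[OF B, of y]] .
  also have "\<dots> = (\<Sum>k\<in>UNIV. x $ k *s (\<Sum>l\<in>UNIV. y $ l *s B (axis k 1) (axis l 1)))"
    by (rule sum.cong[OF refl]) (rule arg_cong[where f="\<lambda>v. x $ _ *s v"], rule clin_expand[OF cbil_clin2[OF B]])
  finally show ?thesis .
qed

lemma cbil_bound: "cbil B \<Longrightarrow> \<exists>K\<ge>0. \<forall>x y. norm (B x y) \<le> K * norm x * norm y"
proof -
  assume B: "cbil B"
  define K where "K = (\<Sum>k\<in>UNIV. \<Sum>l\<in>UNIV. norm (B (axis k 1) (axis l 1)))"
  have "norm (B x y) \<le> K * norm x * norm y" for x y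
  proof -
    have "norm (B x y) \<le> norm x * (\<Sum>k\<in>UNIV. norm (\<Sum>l\<in>UNIV. y $ l *s B (axis k 1) (axis l 1)))"
      unfolding cbil_expand[OF B, of x y] by (rule cvec_sum_bound)
    also have "\<dots> \<le> norm x * (\<Sum>k\<in>UNIV. norm y * (\<Sum>l\<in>UNIV. norm (B (axis k 1) (axis l 1))))"
      by (intro mult_left_mono sum_mono cvec_sum_bound) auto
    also have "\<dots> = K * norm x * norm y" unfolding K_def by (simp add: sum_distrib_left algebra_simps)
    finally show ?thesis .
  qed
  moreover have "K \<ge> 0" unfolding K_def by (intro sum_nonneg) auto
  ultimately show ?thesis by blast
qed

lemma cbil_hol:
  fixes y :: "complex \<Rightarrow> complex^'a" and w :: "complex \<Rightarrow> complex^'b"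
  assumes B: "cbil B" and y: "\<And>i. (\<lambda>z. y z $ i) holomorphic_on S" and w: "\<And>i. (\<lambda>z. w z $ i) holomorphic_on S"
  shows "(\<lambda>z. B (y z) (w z) $ i) holomorphic_on S"
proof -
  have "(\<lambda>z. B (y z) (w z) $ i) = (\<lambda>z. (\<Sum>k\<in>UNIV. y z $ k *s (\<Sum>l\<in>UNIV. w z $ l *s B (axis k 1) (axis l 1))) $ i)"
    by (rule ext) (rule arg_cong[where f="\<lambda>v. v $ i"], rule cbil_expand[OF B])
  then show ?thesis by (simp only:) (simp add: sum_component, intro holomorphic_intros y w)
qed

lemma cbil_add1: "cbil B \<Longrightarrow> B (x + x') y = B x y + B x' y" using clin_add[OF cbil_clin1] by blast
lemma cbil_add2: "cbil B \<Longrightarrow> B x (y + y') = B x y + B x y'" using clin_add[OF cbil_clin2] by blast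
lemma cbil_diff1: "cbil B \<Longrightarrow> B (x - x') y = B x y - B x' y" using clin_diff[OF cbil_clin1] by blast
lemma cbil_diff2: "cbil B \<Longrightarrow> B x (y - y') = B x y - B x y'" using clin_diff[OF cbil_clin2] by blast
lemma cbil_zero1: "cbil B \<Longrightarrow> B 0 y = 0" using clin_zero[OF cbil_clin1] by blast
lemma cbil_zero2: "cbil B \<Longrightarrow> B x 0 = 0" using clin_zero[OF cbil_clin2] by blast
lemma cbil_scale1: "cbil B \<Longrightarrow> B (c *s x) y = c *s B x y" using clin_scale[OF cbil_clin1] by blast
lemma cbil_scale2: "cbil B \<Longrightarrow> B x (c *s y) = c *s B x y" using clin_scale[OF cbil_clin2] by blast

lemma cbil_sqdiff_bound:
  assumes "\<forall>x y. norm (B x y) \<le> K * norm x * norm y" "cbil B" "K \<ge> 0"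
  shows "norm (B y y - B y' y') \<le> K * (norm y + norm y') * norm (y - y')"
proof -
  have "B y y - B y' y' = B y (y - y') + B (y - y') y'"
    using assms(2) by (simp add: cbil_diff1 cbil_diff2)
  then have "norm (B y y - B y' y') \<le> K * norm y * norm (y - y') + K * norm (y - y') * norm y'"
  proof -
    have "norm (B y (y - y') + B (y - y') y') \<le> norm (B y (y - y')) + norm (B (y - y') y')"
      by (rule norm_triangle_ineq)
    also have "\<dots> \<le> K * norm y * norm (y - y') + K * norm (y - y') * norm y'"
      using assms(1) by (intro add_mono) auto
    finally show ?thesis using \<open>B y y - B y' y' = _\<close> by simp
  qed
  then show ?thesis by (simp add: algebra_simps)
qed


lemma matrix_inv_props:
  fixes A :: "'a::field^'n^'n"
  assumes "invertible A"
  shows "A ** matrix_inv A = mat 1" "matrix_inv A ** A = mat 1"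
proof -
  have "\<exists>A'. A ** A' = mat 1 \<and> A' ** A = mat 1" using assms unfolding invertible_def by blast
  then have "A ** matrix_inv A = mat 1 \<and> matrix_inv A ** A = mat 1"
    unfolding matrix_inv_def by (rule someI_ex)
  then show "A ** matrix_inv A = mat 1" "matrix_inv A ** A = mat 1" by auto
qed

lemma matrix_inv_vec:
  fixes A :: "'a::field^'n^'n"
  assumes "invertible A"
  shows "A *v (matrix_inv A *v x) = x" "matrix_inv A *v (A *v x) = x"
  by (simp_all add: matrix_vector_mul_assoc matrix_inv_props[OF assms])

lemma clin_matrix: "clin (\<lambda>v. (M::complex^'a^'b) *v v)"
  by (rule clinI) (simp_all add: vec_eq_iff matrix_vector_mult_def sum_distrib_left sum.distrib algebra_simps)

lemma invertible_of_inj: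
  fixes A :: "'a::field^'n^'n"
  assumes "\<And>x. A *v x = 0 \<Longrightarrow> x = 0"
  shows "invertible A"
  using assms invertible_left_inverse matrix_left_invertible_ker by blast

lemma quad_system:
  fixes B0 B1 :: "complex^'m \<Rightarrow> complex^'m \<Rightarrow> complex^'m" and L0 L1 :: "complex^'m \<Rightarrow> complex^'m"
    and f0 x0 :: "complex^'m"
  assumes B0: "cbil B0" and B1: "cbil B1" and L0: "clin L0" and L1: "clin L1"
    and F0: "B0 x0 x0 + L0 x0 + f0 = 0"
    and inj: "\<And>y. B0 x0 y + B0 y x0 + L0 y = 0 \<Longrightarrow> y = 0"
  shows "\<exists>\<epsilon>>0. \<exists>X C c. (\<forall>i. (\<lambda>z. X z $ i) holomorphic_on ball 0 \<epsilon>) \<and>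
     (\<forall>z\<in>ball 0 \<epsilon>. B0 (X z) (X z) + L0 (X z) + f0 + z *s (B1 (X z) (X z) + L1 (X z)) = 0) \<and>
     B0 x0 c + B0 c x0 + L0 c + (B1 x0 x0 + L1 x0) = 0 \<and>
     (\<forall>z\<in>ball 0 \<epsilon>. norm (X z - x0 - z *s c) \<le> C * (norm z)^2)"
proof -
  define J where "J = (\<lambda>y. B0 x0 y + B0 y x0 + L0 y)"
  have Jlin: "clin J" unfolding J_def
    by (rule clinI) (simp_all add: cbil_add1[OF B0] cbil_add2[OF B0] clin_add[OF L0]
        cbil_scale1[OF B0] cbil_scale2[OF B0] clin_scale[OF L0] vector_add_ldistrib)
  define Jm where "Jm = (\<chi> i k. J (axis k 1) $ i)"
  have Jm: "Jm *v y = J y" for y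
    by (simp add: vec_eq_iff matrix_vector_mult_def Jm_def clin_comp[OF Jlin, of y] mult.commute)
  have Jinv: "invertible Jm"
  proof (rule invertible_of_inj)
    fix x assume "Jm *v x = 0"
    then show "x = 0" using inj[of x] unfolding Jm J_def by blast
  qed
  define Ji where "Ji = matrix_inv Jm"
  define Fl where "Fl = B1 x0 x0 + L1 x0"
  define c where "c = - (Ji *v Fl)"
  have JJi: "J (Ji *v v) = v" for v unfolding Ji_def Jm[symmetric] by (rule matrix_inv_vec(1)[OF Jinv])
  have Jc: "J c + Fl = 0" unfolding c_def using clin_neg[OF Jlin] JJi by simp
  define N where "N = (\<lambda>z y. B0 y y + z *s (B1 x0 y + B1 y x0 + B1 y y + L1 y))"
  define E where "E = (\<lambda>z y. - (Ji *v N z y))"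
  obtain KB0 where KB0: "KB0 \<ge> 0" "\<forall>x y. norm (B0 x y) \<le> KB0 * norm x * norm y" using cbil_bound[OF B0] by blast
  obtain KB1 where KB1: "KB1 \<ge> 0" "\<forall>x y. norm (B1 x y) \<le> KB1 * norm x * norm y" using cbil_bound[OF B1] by blast
  obtain KL1 where KL1: "KL1 \<ge> 0" "\<forall>x. norm (L1 x) \<le> KL1 * norm x" using clin_bound[OF L1] by blast
  obtain KJ where KJ: "KJ \<ge> 0" "\<forall>x. norm (Ji *v x) \<le> KJ * norm x" using clin_bound[OF clin_matrix] by blast
  define K' where "K' = KB0 + KB1 + 2 * KB1 * norm x0 + KL1"
  have K'pos: "K' \<ge> 0" unfolding K'_def using KB0 KB1 KL1 by simp
  have E0: "E z 0 = 0" for z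
    unfolding E_def N_def by (simp add: cbil_zero1[OF B0] cbil_zero1[OF B1] cbil_zero2[OF B1] clin_zero[OF L1])
  have Nlip: "norm (N z y - N z y') \<le> K' * (norm z + norm y + norm y') * norm (y - y')"
    if z1: "norm z \<le> 1" for z y y'
  proof -
    define dd where "dd = y - y'"
    have eq: "N z y - N z y' = (B0 y y - B0 y' y') + z *s (B1 x0 dd + B1 dd x0 + (B1 y y - B1 y' y') + L1 dd)"
      unfolding N_def dd_def
      by (simp add: cbil_diff1[OF B1] cbil_diff2[OF B1] clin_diff[OF L1] vector_add_ldistrib
          vec_eq_iff algebra_simps)
    have a1: "norm (B0 y y - B0 y' y') \<le> KB0 * (norm y + norm y') * norm dd"
      unfolding dd_def by (rule cbil_sqdiff_bound[OF KB0(2) B0 KB0(1)])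
    have a2: "norm (B1 y y - B1 y' y') \<le> KB1 * (norm y + norm y') * norm dd"
      unfolding dd_def by (rule cbil_sqdiff_bound[OF KB1(2) B1 KB1(1)])
    have a3: "norm (B1 x0 dd) \<le> KB1 * norm x0 * norm dd" using KB1 by blast
    have a4: "norm (B1 dd x0) \<le> KB1 * norm x0 * norm dd" using KB1(2)[rule_format, of dd x0] by (simp add: algebra_simps)
    have a5: "norm (L1 dd) \<le> KL1 * norm dd" using KL1 by blast
    have "norm (B1 x0 dd + B1 dd x0 + (B1 y y - B1 y' y') + L1 dd)
          \<le> norm (B1 x0 dd) + norm (B1 dd x0) + norm (B1 y y - B1 y' y') + norm (L1 dd)"
      by (meson add_mono norm_triangle_ineq order_trans order_refl)
    also have "\<dots> \<le> (2 * KB1 * norm x0 + KL1) * norm dd + KB1 * (norm y + norm y') * norm dd"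
      using a2 a3 a4 a5 by (simp add: algebra_simps)
    finally have b1: "norm (B1 x0 dd + B1 dd x0 + (B1 y y - B1 y' y') + L1 dd)
          \<le> (2 * KB1 * norm x0 + KL1) * norm dd + KB1 * (norm y + norm y') * norm dd" .
    have nz: "norm z * (KB1 * (norm y + norm y') * norm dd) \<le> KB1 * (norm y + norm y') * norm dd"
      using z1 KB1(1) by (intro mult_left_le_one_le) auto
    have "norm (N z y - N z y') \<le> norm (B0 y y - B0 y' y') + norm z * norm (B1 x0 dd + B1 dd x0 + (B1 y y - B1 y' y') + L1 dd)"
      unfolding eq by (metis norm_smult_cvec norm_triangle_ineq)
    also have "\<dots> \<le> KB0 * (norm y + norm y') * norm dd + norm z * ((2 * KB1 * norm x0 + KL1) * norm dd + KB1 * (norm y + norm y') * norm dd)"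
      using a1 b1 by (intro add_mono mult_left_mono) auto
    also have "\<dots> \<le> KB0 * (norm y + norm y') * norm dd + norm z * ((2 * KB1 * norm x0 + KL1) * norm dd) + KB1 * (norm y + norm y') * norm dd"
      using nz by (simp add: algebra_simps)
    also have "\<dots> \<le> K' * (norm z + norm y + norm y') * norm dd"
      unfolding K'_def using KB0 KB1 KL1 by (simp add: algebra_simps)
    finally show ?thesis unfolding dd_def .
  qed
  have Elip: "norm (E z y - E z y') \<le> (KJ * K') * (norm z + norm y + norm y') * norm (y - y')"
    if "norm z \<le> 1" "norm y \<le> 1" "norm y' \<le> 1" for z y y'
  proof -
    have "E z y - E z y' = - (Ji *v (N z y - N z y'))" unfolding E_def by (simp add: matrix_vector_mult_diff_distrib)
    then have "norm (E z y - E z y') \<le> KJ * norm (N z y - N z y')" using KJ by simp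
    also have "\<dots> \<le> KJ * (K' * (norm z + norm y + norm y') * norm (y - y'))"
      using Nlip[OF that(1)] KJ by (intro mult_left_mono) auto
    finally show ?thesis by (simp add: algebra_simps)
  qed
  have Ehol: "(\<lambda>z. E z (y z) $ i) holomorphic_on S"
    if "open S" "\<And>i. (\<lambda>z. y z $ i) holomorphic_on S" for y :: "complex \<Rightarrow> complex^'m" and S i
  proof -
    have cst: "(\<lambda>z. x0 $ i) holomorphic_on S" for i by simp
    have "(\<lambda>z. N z (y z) $ i) holomorphic_on S" for i
      unfolding N_def
      by (simp, intro holomorphic_intros cbil_hol[OF B0] cbil_hol[OF B1] clin_hol[OF L1] that cst)
    then have "(\<lambda>z. (Ji *v N z (y z)) $ i) holomorphic_on S"
      by (rule clin_hol[OF clin_matrix])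
    then show ?thesis unfolding E_def by (simp add: holomorphic_on_minus)
  qed
  obtain e Y C where epos: "e > 0" and Yhol: "\<forall>i. (\<lambda>z. Y z $ i) holomorphic_on ball 0 e"
    and Yfix: "\<forall>z\<in>ball 0 e. Y z = z *s c + E z (Y z)"
    and Ysmall: "\<forall>z\<in>ball 0 e. norm (Y z - z *s c) \<le> C * (norm z)^2"
  proof -
    have KK: "0 \<le> KJ * K'" using KJ K'pos by simp
    have "\<exists>\<epsilon>>0. \<exists>Y C. (\<forall>i. (\<lambda>z. Y z $ i) holomorphic_on ball 0 \<epsilon>) \<and>
           (\<forall>z\<in>ball 0 \<epsilon>. Y z = z *s c + E z (Y z)) \<and>
           (\<forall>z\<in>ball 0 \<epsilon>. norm (Y z - z *s c) \<le> C * (norm z)^2)"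
      apply (rule contraction_holo[of E "KJ * K'" c])
         apply (rule E0)
        apply (erule (2) Elip)
       apply (erule Ehol, assumption)
      apply (rule KK)
      done
    then show ?thesis using that by blast
  qed
  define X where "X = (\<lambda>z. x0 + Y z)"
  have Xhol: "\<forall>i. (\<lambda>z. X z $ i) holomorphic_on ball 0 e" 
  proof
    fix i
    have "(\<lambda>z. x0 $ i + Y z $ i) holomorphic_on ball 0 e"
      by (rule holomorphic_on_add) (use Yhol in auto)
    then show "(\<lambda>z. X z $ i) holomorphic_on ball 0 e" unfolding X_def by simp
  qed
  have Xeq: "B0 (X z) (X z) + L0 (X z) + f0 + z *s (B1 (X z) (X z) + L1 (X z)) = 0" if "z \<in> ball 0 e" for z
  proof -
    have JY: "J (Y z) = - (z *s Fl) - N z (Y z)"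
    proof -
      have "J (Y z) = J (z *s c + E z (Y z))" using Yfix that by metis
      also have "\<dots> = z *s J c + J (E z (Y z))" by (simp add: clin_add[OF Jlin] clin_scale[OF Jlin])
      also have "J (E z (Y z)) = - N z (Y z)" unfolding E_def by (simp add: clin_neg[OF Jlin] JJi)
      also have "J c = - Fl" using Jc by (simp add: eq_neg_iff_add_eq_0)
      finally show ?thesis by (simp add: vector_smult_rneg)
    qed
    have "B0 (X z) (X z) + L0 (X z) + f0 + z *s (B1 (X z) (X z) + L1 (X z))
        = (B0 x0 x0 + L0 x0 + f0) + J (Y z) + N z (Y z) + z *s Fl"
      unfolding X_def J_def N_def Fl_def
      by (simp add: cbil_add1[OF B0] cbil_add2[OF B0] cbil_add1[OF B1] cbil_add2[OF B1]
          clin_add[OF L0] clin_add[OF L1] vector_add_ldistrib algebra_simps)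
    also have "\<dots> = 0" using F0 JY by simp
    finally show ?thesis .
  qed
  have Jc': "B0 x0 c + B0 c x0 + L0 c + (B1 x0 x0 + L1 x0) = 0" using Jc unfolding J_def Fl_def by simp
  have Xsmall: "\<forall>z\<in>ball 0 e. norm (X z - x0 - z *s c) \<le> C * (norm z)^2"
    using Ysmall unfolding X_def by simp
  show ?thesis
    apply (rule exI[of _ e])
    apply (rule conjI[OF epos])
    apply (rule exI[of _ X])
    apply (rule exI[of _ C])
    apply (rule exI[of _ c])
    using Xhol Xeq Jc' Xsmall by blast
qed


definition mk :: "complex \<Rightarrow> complex^'b::finite \<Rightarrow> complex^(unit + 'b)" where
  "mk a V = (\<chi> i. case i of Inl _ \<Rightarrow> a | Inr j \<Rightarrow> V $ j)"
definition mfst :: "complex^(unit + 'b::finite) \<Rightarrow> complex" where "mfst x = x $ Inl ()"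
definition msnd :: "complex^(unit + 'b::finite) \<Rightarrow> complex^'b" where "msnd x = (\<chi> j. x $ Inr j)"

lemma mk_nth[simp]: "mk a V $ Inl u = a" "mk a V $ Inr j = V $ j" by (simp_all add: mk_def)
lemma mfst_mk[simp]: "mfst (mk a V) = a" by (simp add: mfst_def)
lemma msnd_mk[simp]: "msnd (mk a V) = V" by (simp add: msnd_def vec_eq_iff)
lemma mk_surj: "mk (mfst x) (msnd x) = x"
  by (simp add: vec_eq_iff mk_def mfst_def msnd_def split: sum.split)
lemma mk_add[simp]: "mk a V + mk b W = mk (a + b) (V + W)"
  by (simp add: vec_eq_iff mk_def split: sum.split)
lemma mk_diff[simp]: "mk a V - mk b W = mk (a - b) (V - W)"
  by (simp add: vec_eq_iff mk_def split: sum.split)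
lemma mk_neg[simp]: "- mk a V = mk (- a) (- V)"
  by (simp add: vec_eq_iff mk_def split: sum.split)
lemma mk_smult[simp]: "c *s mk a V = mk (c * a) (c *s V)"
  by (simp add: vec_eq_iff mk_def split: sum.split)
lemma mk_zero[simp]: "mk 0 0 = 0"
  by (simp add: vec_eq_iff mk_def split: sum.split)
lemma mk_eq_0[simp]: "mk a V = 0 \<longleftrightarrow> a = 0 \<and> V = 0"
  by (auto simp: vec_eq_iff mk_def split: sum.split)
lemma mk_eq_iff: "mk a V = mk b W \<longleftrightarrow> a = b \<and> V = W"
  by (metis mfst_mk msnd_mk)
lemma mfst_add[simp]: "mfst (x + y) = mfst x + mfst y" by (simp add: mfst_def)
lemma msnd_add[simp]: "msnd (x + y) = msnd x + msnd y" by (simp add: msnd_def vec_eq_iff)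
lemma mfst_smult[simp]: "mfst (c *s x) = c * mfst x" by (simp add: mfst_def)
lemma msnd_smult[simp]: "msnd (c *s x) = c *s msnd x" by (simp add: msnd_def vec_eq_iff)
lemma mfst_zero[simp]: "mfst 0 = 0" by (simp add: mfst_def)
lemma msnd_zero[simp]: "msnd 0 = 0" by (simp add: msnd_def vec_eq_iff)
lemma mfst_diff[simp]: "mfst (x - y) = mfst x - mfst y" by (simp add: mfst_def)
lemma msnd_diff[simp]: "msnd (x - y) = msnd x - msnd y" by (simp add: msnd_def vec_eq_iff)

lemma norm_mfst: "norm (mfst x) \<le> norm x" unfolding mfst_def by (rule Finite_Cartesian_Product.norm_nth_le)
lemma norm_msnd: "norm (msnd x) \<le> norm x"
proof -
  have "(\<Sum>j\<in>UNIV. (norm (x $ Inr j))\<^sup>2) = (\<Sum>i\<in>range Inr. (norm (x $ i))\<^sup>2)"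
    by (simp add: sum.reindex)
  also have "\<dots> \<le> (\<Sum>i\<in>UNIV. (norm (x $ i))\<^sup>2)" by (rule sum_mono2) auto
  finally show ?thesis unfolding msnd_def norm_vec_def L2_set_def by simp
qed


definition upart :: "'a^('n::finite + 'r::finite) \<Rightarrow> 'a^'n" where "upart V = (\<chi> a. V $ Inl a)"
definition vpart :: "'a^('n::finite + 'r::finite) \<Rightarrow> 'a^'r" where "vpart V = (\<chi> b. V $ Inr b)"

lemma stack_nth[simp]: "stack x y $ Inl a = x $ a" "stack x y $ Inr b = y $ b"
  by (simp_all add: stack_def)
lemma upart_stack[simp]: "upart (stack x y) = x" by (simp add: upart_def vec_eq_iff)
lemma vpart_stack[simp]: "vpart (stack x y) = y" by (simp add: vpart_def vec_eq_iff)
lemma stack_parts: "stack (upart V) (vpart V) = V"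
  by (simp add: vec_eq_iff stack_def upart_def vpart_def split: sum.split)
lemma upart_nth[simp]: "upart V $ a = V $ Inl a" by (simp add: upart_def)
lemma vpart_nth[simp]: "vpart V $ b = V $ Inr b" by (simp add: vpart_def)
lemma stack_add[simp]: "stack x y + stack x' y' = stack (x + x') (y + y')"
  by (simp add: vec_eq_iff stack_def split: sum.split)
lemma stack_diff[simp]: "stack x y - stack x' y' = stack (x - x') (y - y')"
  by (simp add: vec_eq_iff stack_def split: sum.split)
lemma stack_neg[simp]: "- stack x y = stack (- x) (- y)"
  by (simp add: vec_eq_iff stack_def split: sum.split)
lemma stack_smult[simp]: "c *s stack x y = stack (c *s x) (c *s y)"
  by (simp add: vec_eq_iff stack_def split: sum.split)
lemma stack_zero[simp]: "stack 0 0 = 0"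
  by (simp add: vec_eq_iff stack_def split: sum.split)
lemma stack_eq_0[simp]: "stack x y = 0 \<longleftrightarrow> x = 0 \<and> y = 0"
  by (auto simp: vec_eq_iff stack_def split: sum.split)
lemma stack_eq_iff: "stack x y = stack x' y' \<longleftrightarrow> x = x' \<and> y = y'"
  by (metis upart_stack vpart_stack)
lemma upart_add[simp]: "upart (x + y) = upart x + upart y" by (simp add: vec_eq_iff)
lemma vpart_add[simp]: "vpart (x + y) = vpart x + vpart y" by (simp add: vec_eq_iff)
lemma upart_diff[simp]: "upart (x - y) = upart x - upart y" by (simp add: vec_eq_iff)
lemma vpart_diff[simp]: "vpart (x - y) = vpart x - vpart y" by (simp add: vec_eq_iff)
lemma upart_neg[simp]: "upart (- x) = - upart x" by (simp add: vec_eq_iff)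
lemma vpart_neg[simp]: "vpart (- x) = - vpart x" by (simp add: vec_eq_iff)
lemma upart_smult[simp]: "upart (c *s x) = c *s upart x" by (simp add: vec_eq_iff)
lemma vpart_smult[simp]: "vpart (c *s x) = c *s vpart x" by (simp add: vec_eq_iff)
lemma upart_zero[simp]: "upart 0 = 0" by (simp add: vec_eq_iff)
lemma vpart_zero[simp]: "vpart 0 = 0" by (simp add: vec_eq_iff)

lemma sum_UNIV_plus: "(\<Sum>i\<in>(UNIV::('n::finite + 'r::finite) set). g i) = (\<Sum>a\<in>UNIV. g (Inl a)) + (\<Sum>b\<in>UNIV. g (Inr b))"
proof -
  have "(\<Sum>i\<in>(UNIV::('n + 'r) set). g i) = (\<Sum>i\<in>UNIV <+> UNIV. g i)" by simp
  also have "\<dots> = (\<Sum>a\<in>UNIV. g (Inl a)) + (\<Sum>b\<in>UNIV. g (Inr b))"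
    by (subst sum.Plus) (simp_all add: comp_def)
  finally show ?thesis .
qed

lemma blk_mult:
  fixes P11 :: "'a::comm_semiring_1^'n::finite^'n"
  shows "blk P11 P12 P21 P22 *v V = stack (P11 *v upart V + P12 *v vpart V) (P21 *v upart V + P22 *v vpart V)"
  by (simp add: vec_eq_iff blk_def stack_def matrix_vector_mult_def sum_UNIV_plus split: sum.split)

lemma rowblk_mult: "rowblk P1 P2 *v V = P1 *v upart V + P2 *v vpart V"
  by (simp add: vec_eq_iff rowblk_def matrix_vector_mult_def sum_UNIV_plus)

lemma embI_mult: "(embI :: complex^'r::finite^('n::finite+'r)) *v s = stack 0 s"
proof -
  have "(\<Sum>j\<in>UNIV. (if b = j then 1 else 0) * s $ j) = s $ b" for b :: 'r
  proof -
    have "(\<Sum>j\<in>UNIV. (if b = j then 1 else 0) * s $ j) = (\<Sum>j\<in>UNIV. if b = j then s $ j else 0)"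
      by (rule sum.cong) auto
    then show ?thesis by simp
  qed
  then show ?thesis by (simp add: vec_eq_iff embI_def stack_def matrix_vector_mult_def split: sum.split)
qed

lemma cmat_blk: "cmat (blk P11 P12 P21 P22) = blk (cmat P11) (cmat P12) (cmat P21) (cmat P22)"
  by (simp add: vec_eq_iff cmat_def blk_def split: sum.split)

lemma cmat_zero[simp]: "cmat 0 = 0" by (simp add: vec_eq_iff cmat_def)
lemma cmat_mult: "cmat (A ** B) = cmat A ** cmat B"
  by (simp add: vec_eq_iff cmat_def matrix_matrix_mult_def)
lemma cmat_add: "cmat (A + B) = cmat A + cmat B" by (simp add: vec_eq_iff cmat_def)
lemma cmat_diff: "cmat (A - B) = cmat A - cmat B" by (simp add: vec_eq_iff cmat_def)
lemma cmat_neg: "cmat (- A) = - cmat A" by (simp add: vec_eq_iff cmat_def)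
lemma cmat_one: "cmat (mat 1) = mat 1" by (simp add: vec_eq_iff cmat_def mat_def)
lemma cmat_cvec: "cmat A *v cvec x = cvec (A *v x)"
  by (simp add: vec_eq_iff cmat_def cvec_def matrix_vector_mult_def)
lemma cvec_add: "cvec (x + y) = cvec x + cvec y" by (simp add: vec_eq_iff cvec_def)
lemma cvec_diff: "cvec (x - y) = cvec x - cvec y" by (simp add: vec_eq_iff cvec_def)
lemma cvec_neg: "cvec (- x) = - cvec x" by (simp add: vec_eq_iff cvec_def)
lemma cvec_zero[simp]: "cvec 0 = 0" by (simp add: vec_eq_iff cvec_def)
lemma cvec_smult: "cvec (r *s x) = complex_of_real r *s cvec x" by (simp add: vec_eq_iff cvec_def)
lemma cvec_eq_0[simp]: "cvec x = 0 \<longleftrightarrow> x = 0" by (simp add: vec_eq_iff cvec_def)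
lemma cvec_nth[simp]: "cvec x $ i = complex_of_real (x $ i)" by (simp add: cvec_def)
lemma cmat_nth[simp]: "cmat A $ i $ j = complex_of_real (A $ i $ j)" by (simp add: cmat_def)
lemma cvec_stack: "cvec (stack x y) = stack (cvec x) (cvec y)"
  by (simp add: vec_eq_iff cvec_def stack_def split: sum.split)

lemma matrix_inv_unique:
  fixes A :: "'a::field^'n^'n"
  assumes "A ** B = mat 1"
  shows "matrix_inv A = B" "invertible A"
proof -
  show inv: "invertible A" using assms invertible_right_inverse by blast
  have "matrix_inv A = matrix_inv A ** (A ** B)" using assms by simp
  also have "\<dots> = B" by (simp add: matrix_mul_assoc matrix_inv_props[OF inv])
  finally show "matrix_inv A = B" .
qed

lemma cmat_inv:
  fixes A :: "real^'n^'n"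
  assumes "invertible A"
  shows "invertible (cmat A)" "matrix_inv (cmat A) = cmat (matrix_inv A)"
proof -
  have "cmat A ** cmat (matrix_inv A) = mat 1"
    by (simp add: cmat_mult[symmetric] matrix_inv_props[OF assms] cmat_one)
  then show "invertible (cmat A)" "matrix_inv (cmat A) = cmat (matrix_inv A)"
    using matrix_inv_unique by blast+
qed


lemma bl_smult: "bounded_linear (\<lambda>c::complex. c *s (V::complex^'b))"
proof (rule bounded_linear_intro[where K="norm V"])
  show "(x + y) *s V = x *s V + y *s V" for x y by (simp add: vec_eq_iff algebra_simps)
  show "(r *\<^sub>R x) *s V = r *\<^sub>R (x *s V)" for r x by (simp add: vec_eq_iff mult_scaleR_left)
  show "norm (x *s V) \<le> norm x * norm V" for x by (simp add: norm_smult_cvec)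
qed

lemma bl_mat: "bounded_linear (\<lambda>v. (M::complex^'a^'b) *v v)"
proof -
  obtain K where K: "K \<ge> 0" "\<forall>x. norm (M *v x) \<le> K * norm x" using clin_bound[OF clin_matrix] by blast
  show ?thesis
  proof (rule bounded_linear_intro[where K=K])
    show "M *v (x + y) = M *v x + M *v y" for x y by (rule matrix_vector_right_distrib)
    show "M *v (r *\<^sub>R x) = r *\<^sub>R (M *v x)" for r x
      by (simp add: vec_eq_iff matrix_vector_mult_def scaleR_sum_right mult_scaleR_right)
    show "norm (M *v x) \<le> norm x * K" for x using K by (simp add: mult.commute)
  qed
qed

lemma mv_smult: "(M::complex^'a^'b) *v (c *s v) = c *s (M *v v)"
  using clin_scale[OF clin_matrix] by blast

lemma vd_comp_lin:
  assumes "(W has_vector_derivative D) (at x)" "bounded_linear f"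
  shows "((\<lambda>x. f (W x)) has_vector_derivative f D) (at x)"
proof -
  have "((\<lambda>x. f (W x)) has_derivative (\<lambda>h. f (h *\<^sub>R D))) (at x)"
    using bounded_linear.has_derivative[OF assms(2) assms(1)[unfolded has_vector_derivative_def]] .
  moreover have "(\<lambda>h. f (h *\<^sub>R D)) = (\<lambda>h. h *\<^sub>R f D)"
    using linear_scale[OF bounded_linear.linear[OF assms(2)]] by auto
  ultimately show ?thesis unfolding has_vector_derivative_def by simp
qed

lemma vd_exp:
  "((\<lambda>x. exp (\<mu> * complex_of_real x) *s V) has_vector_derivative ((\<mu> * exp (\<mu> * complex_of_real x)) *s V)) (at x)"
proof -
  have g: "((\<lambda>x. exp (x *\<^sub>R \<mu>)) has_vector_derivative exp (x *\<^sub>R \<mu>) * \<mu>) (at x)"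
    by (rule exp_scaleR_has_vector_derivative_right)
  have "((\<lambda>x. exp (x *\<^sub>R \<mu>) *s V) has_vector_derivative ((exp (x *\<^sub>R \<mu>) * \<mu>) *s V)) (at x)"
    by (rule vd_comp_lin[OF g bl_smult])
  moreover have "(\<lambda>x. exp (x *\<^sub>R \<mu>)) = (\<lambda>x. exp (\<mu> * complex_of_real x))"
    by (auto simp: scaleR_conv_of_real mult.commute)
  ultimately show ?thesis by (simp add: scaleR_conv_of_real mult.commute)
qed

lemma vd_scalar_exp:
  "((\<lambda>x. exp (\<mu> * complex_of_real x)) has_vector_derivative (\<mu> * exp (\<mu> * complex_of_real x))) (at x)"
proof -
  have g: "((\<lambda>x. exp (x *\<^sub>R \<mu>)) has_vector_derivative exp (x *\<^sub>R \<mu>) * \<mu>) (at x)"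
    by (rule exp_scaleR_has_vector_derivative_right)
  moreover have "(\<lambda>x. exp (x *\<^sub>R \<mu>)) = (\<lambda>x. exp (\<mu> * complex_of_real x))"
    by (auto simp: scaleR_conv_of_real mult.commute)
  ultimately show ?thesis by (simp add: scaleR_conv_of_real mult.commute)
qed

lemma ode_basis:
  fixes A Q :: "complex^('n::finite + 'r::finite)^('n + 'r)" and V :: "'k \<Rightarrow> complex^('n + 'r)"
    and \<mu> :: "'k \<Rightarrow> complex" and h :: "'n + 'r \<Rightarrow> 'k"
  assumes invA: "invertible A"
    and eig: "\<And>k. Q *v V k - lam *s V k - \<mu> k *s (A *v V k) = 0"
    and h: "bij h"
    and Pinv: "invertible (\<chi> i j. V (h j) $ i)"
  shows "(\<forall>k. (\<lambda>x. exp (\<mu> k * complex_of_real x) *s V k) \<in> odesols A Q lam) \<and>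
     (\<forall>c. (\<forall>x. (\<Sum>k\<in>UNIV. c k *s (exp (\<mu> k * complex_of_real x) *s V k)) = 0) \<longrightarrow> (\<forall>k. c k = 0)) \<and>
     (\<forall>W\<in>odesols A Q lam. \<exists>c. \<forall>x. W x = (\<Sum>k\<in>UNIV. c k *s (exp (\<mu> k * complex_of_real x) *s V k)))"
proof (intro conjI allI impI ballI)
  define P :: "complex^('n + 'r)^('n + 'r)" where "P = (\<chi> i j. V (h j) $ i)"
  have Pcol: "P *v y = (\<Sum>j\<in>UNIV. y $ j *s V (h j))" for y
    by (simp add: P_def matrix_mult_sum column_def)
  have reidx: "(\<Sum>k\<in>UNIV. g k) = (\<Sum>j\<in>UNIV. g (h j))" for g :: "'k \<Rightarrow> complex^('n+'r)"
  proof -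
    have "(\<Sum>j\<in>UNIV. g (h j)) = (\<Sum>k\<in>h ` UNIV. g k)"
      using h by (simp add: sum.reindex bij_is_inj)
    also have "h ` UNIV = UNIV" using h by (simp add: bij_is_surj)
    finally show ?thesis by simp
  qed
  have Pinv': "invertible P" using Pinv unfolding P_def .
  {
    fix k
    show "(\<lambda>x. exp (\<mu> k * complex_of_real x) *s V k) \<in> odesols A Q lam"
      unfolding odesols_def
    proof (intro CollectI allI exI conjI)
      fix x
      show "((\<lambda>x. exp (\<mu> k * complex_of_real x) *s V k) has_vector_derivative
          ((\<mu> k * exp (\<mu> k * complex_of_real x)) *s V k)) (at x)" by (rule vd_exp)
      have "- (A *v ((\<mu> k * exp (\<mu> k * complex_of_real x)) *s V k)) +
          (Q *v (exp (\<mu> k * complex_of_real x) *s V k) - lam *s (exp (\<mu> k * complex_of_real x) *s V k))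
          = exp (\<mu> k * complex_of_real x) *s (Q *v V k - lam *s V k - \<mu> k *s (A *v V k))"
        by (simp add: mv_smult vec_eq_iff algebra_simps)
      also have "\<dots> = 0" using eig by simp
      finally show "- (A *v ((\<mu> k * exp (\<mu> k * complex_of_real x)) *s V k)) +
          (Q *v (exp (\<mu> k * complex_of_real x) *s V k) - lam *s (exp (\<mu> k * complex_of_real x) *s V k)) = 0" .
    qed
  }
  {
    fix c :: "'k \<Rightarrow> complex" and k
    assume "\<forall>x. (\<Sum>k\<in>UNIV. c k *s (exp (\<mu> k * complex_of_real x) *s V k)) = 0"
    then have "(\<Sum>k\<in>UNIV. c k *s (exp (\<mu> k * complex_of_real 0) *s V k)) = 0" by blast
    then have "(\<Sum>k\<in>UNIV. c k *s V k) = 0" by simp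
    then have "P *v (\<chi> j. c (h j)) = 0" unfolding Pcol using reidx[of "\<lambda>k. c k *s V k"] by simp
    then have "P *v (\<chi> j. c (h j)) = P *v 0" by simp
    then have "(\<chi> j. c (h j)) = 0" by (rule injD[OF inj_matrix_vector_mult[OF Pinv']])
    then have "c (h j) = 0" for j by (simp add: vec_eq_iff)
    moreover obtain j where "k = h j" using h by (metis bij_pointE)
    ultimately show "c k = 0" by simp
  }
  {
    fix W assume W: "W \<in> odesols A Q lam"
    define Ai where "Ai = matrix_inv A"
    define Pi where "Pi = matrix_inv P"
    have Veig: "Ai *v (Q *v V k - lam *s V k) = \<mu> k *s V k" for k
    proof -
      have "Q *v V k - lam *s V k = \<mu> k *s (A *v V k)" using eig[of k] by (simp add: algebra_simps)
      then show ?thesis unfolding Ai_def by (simp add: mv_smult matrix_inv_vec[OF invA])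
    qed
    define M where "M = (\<lambda>v. Ai *v (Q *v v - lam *s v))"
    have Mlin: "clin M" unfolding M_def
      by (rule clinI) (simp_all add: matrix_vector_right_distrib mv_smult vector_add_ldistrib
          matrix_vector_mult_diff_distrib vector_ssub_ldistrib algebra_simps vector_smult_assoc mult.commute)
    have Mdiag: "Pi *v M (P *v y) = (\<chi> j. \<mu> (h j) * y $ j)" for y
    proof -
      have "M (P *v y) = (\<Sum>j\<in>UNIV. y $ j *s M (V (h j)))"
        unfolding Pcol by (simp add: clin_sum[OF Mlin] clin_scale[OF Mlin])
      also have "\<dots> = (\<Sum>j\<in>UNIV. (\<mu> (h j) * y $ j) *s V (h j))"
        using Veig unfolding M_def by (simp add: vector_smult_assoc mult.commute)
      also have "\<dots> = P *v (\<chi> j. \<mu> (h j) * y $ j)" unfolding Pcol by simp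
      finally show ?thesis unfolding Pi_def by (simp add: matrix_inv_vec[OF Pinv'])
    qed
    obtain D where D: "\<And>x. (W has_vector_derivative D x) (at x)"
      "\<And>x. - (A *v D x) + (Q *v W x - lam *s W x) = 0"
    proof -
      have "\<forall>x. \<exists>D. (W has_vector_derivative D) (at x) \<and> - (A *v D) + (Q *v W x - lam *s W x) = 0"
        using W unfolding odesols_def by blast
      then have "\<exists>D. \<forall>x. (W has_vector_derivative D x) (at x) \<and> - (A *v D x) + (Q *v W x - lam *s W x) = 0"
        by (rule choice)
      then show ?thesis using that by blast
    qed
    have DM: "D x = M (W x)" for x
    proof -
      have "A *v D x = Q *v W x - lam *s W x" using D(2)[of x] by (simp add: algebra_simps)
      then have "Ai *v (A *v D x) = Ai *v (Q *v W x - lam *s W x)" by simp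
      then show ?thesis unfolding M_def Ai_def by (simp add: matrix_inv_vec(2)[OF invA])
    qed
    define c where "c = (\<lambda>x. Pi *v W x)"
    have WPc: "W x = P *v c x" for x unfolding c_def Pi_def by (simp add: matrix_inv_vec[OF Pinv'])
    have cder: "(c has_vector_derivative (\<chi> j. \<mu> (h j) * c x $ j)) (at x)" for x
    proof -
      have "(c has_vector_derivative Pi *v D x) (at x)"
        unfolding c_def by (rule vd_comp_lin[OF D(1) bl_mat])
      moreover have "Pi *v D x = (\<chi> j. \<mu> (h j) * c x $ j)" unfolding DM WPc by (rule Mdiag)
      ultimately show ?thesis by simp
    qed
    have cj: "c x $ j = exp (\<mu> (h j) * complex_of_real x) * c 0 $ j" for x j
    proof -
      define m where "m = \<mu> (h j)"
      define g where "g = (\<lambda>x. exp (- m * complex_of_real x) * c x $ j)"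
      have gd: "(g has_vector_derivative 0) (at x)" for x
      proof -
        have d1: "((\<lambda>x. c x $ j) has_vector_derivative m * c x $ j) (at x)"
          using vd_comp_lin[OF cder[of x] bounded_linear_vec_nth[of j]] unfolding m_def by simp
        have d2: "((\<lambda>x. exp (- m * complex_of_real x)) has_vector_derivative (- m * exp (- m * complex_of_real x))) (at x)"
          by (rule vd_scalar_exp)
        have "(g has_vector_derivative (exp (- m * complex_of_real x) * (m * c x $ j) + (- m * exp (- m * complex_of_real x)) * c x $ j)) (at x)"
          unfolding g_def by (rule has_vector_derivative_mult[OF d2 d1])
        then show ?thesis by (simp add: algebra_simps)
      qed
      have "\<exists>C. \<forall>x\<in>UNIV. g x = C"
      proof (rule has_derivative_zero_constant)
        show "convex (UNIV::real set)" by simp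
        fix x :: real
        have "(g has_derivative (\<lambda>h. h *\<^sub>R 0)) (at x)" using gd[of x] unfolding has_vector_derivative_def .
        then show "(g has_derivative (\<lambda>h. 0)) (at x within UNIV)" by simp
      qed
      then have "g x = g 0" by auto
      then have "exp (- m * complex_of_real x) * c x $ j = c 0 $ j" unfolding g_def by simp
      then have "exp (m * complex_of_real x) * (exp (- m * complex_of_real x) * c x $ j) = exp (m * complex_of_real x) * c 0 $ j"
        by simp
      then show ?thesis unfolding m_def[symmetric] by (simp add: exp_minus field_simps)
    qed
    define coef where "coef = (\<lambda>k. c 0 $ inv h k)"
    show "\<exists>c. \<forall>x. W x = (\<Sum>k\<in>UNIV. c k *s (exp (\<mu> k * complex_of_real x) *s V k))"
    proof (intro exI allI)
      fix x
      have "W x = (\<Sum>j\<in>UNIV. c x $ j *s V (h j))" unfolding WPc Pcol ..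
      also have "\<dots> = (\<Sum>j\<in>UNIV. coef (h j) *s (exp (\<mu> (h j) * complex_of_real x) *s V (h j)))"
      proof (rule sum.cong[OF refl])
        fix j
        have "coef (h j) = c 0 $ j" unfolding coef_def using h by (simp add: bij_is_inj)
        then show "c x $ j *s V (h j) = coef (h j) *s (exp (\<mu> (h j) * complex_of_real x) *s V (h j))"
          using cj[of x j] by (simp add: vector_smult_assoc mult.commute)
      qed
      also have "\<dots> = (\<Sum>k\<in>UNIV. coef k *s (exp (\<mu> k * complex_of_real x) *s V k))"
        by (rule reidx[symmetric])
      finally show "W x = (\<Sum>k\<in>UNIV. coef k *s (exp (\<mu> k * complex_of_real x) *s V k))" .
    qed
  }
qed


lemma smult_sum: "(c::complex) *s sum f A = (\<Sum>x\<in>A. c *s (f x :: complex^'b))"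
  by (induction A rule: infinite_finite_induct) (simp_all add: vector_add_ldistrib)

lemma eig_indep:
  fixes M :: "complex^'r^'r" and s :: "'k \<Rightarrow> complex^'r"
  assumes eig: "\<And>j. M *v s j = g j *s s j" and nz: "\<And>j. s j \<noteq> 0" and inj: "inj g"
  shows "finite T \<Longrightarrow> (\<Sum>j\<in>T. c j *s s j) = 0 \<Longrightarrow> \<forall>j\<in>T. c j = 0"
proof (induction T arbitrary: c rule: finite_induct)
  case empty then show ?case by simp
next
  case (insert j T)
  have e0: "c j *s s j + (\<Sum>k\<in>T. c k *s s k) = 0" using insert by simp
  have "M *v (c j *s s j + (\<Sum>k\<in>T. c k *s s k)) - g j *s (c j *s s j + (\<Sum>k\<in>T. c k *s s k)) = 0"
    using e0 by simp
  then have "(\<Sum>k\<in>T. (c k * (g k - g j)) *s s k) = 0"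
    by (simp add: matrix_vector_right_distrib clin_sum[OF clin_matrix] mv_smult eig vector_smult_assoc
        vector_add_ldistrib smult_sum sum_subtractf[symmetric] algebra_simps vector_sub_rdistrib)
  then have "\<forall>k\<in>T. c k * (g k - g j) = 0" using insert.IH[of "\<lambda>k. c k * (g k - g j)"] by simp
  moreover have "g k \<noteq> g j" if "k \<in> T" for k using inj insert.hyps(2) that by (metis injD)
  ultimately have cT: "\<forall>k\<in>T. c k = 0" by simp
  then have "c j *s s j = 0" using e0 by simp
  then have "c j = 0" using nz[of j] by (simp add: vec_eq_iff) (metis mult_eq_0_iff)
  then show ?case using cT by simp
qed

locale relax =
  fixes fu :: "real^'n::finite^'n" and fv :: "real^'r::finite^'n"
    and gu :: "real^'n^'r" and gv :: "real^'r^'r"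
    and qu :: "real^'n^'r" and qv :: "real^'r^'r"
    and a :: "'n \<Rightarrow> real" and rs :: "'n \<Rightarrow> real^'n" and ls :: "'n \<Rightarrow> real^'n"
  assumes H1_nonzero: "0 \<notin> eigvals (cmat (blk fu fv gu gv))"
    and qv_stable: "\<forall>\<sigma>\<in>eigvals (cmat qv). Re \<sigma> < 0"
    and H2_distinct: "inj a"
    and H2_nonzero: "\<forall>j. a j \<noteq> 0"
    and H2_right: "\<forall>j. dfstar fu fv qu qv *v rs j = a j *s rs j"
    and H2_left: "\<forall>j. ls j v* dfstar fu fv qu qv = a j *s ls j"
    and H2_norm: "\<forall>j k. ls j \<bullet> rs k = (if j = k then 1 else 0)"
    and A1: "card (eigvals (rowblk (cmat qu) (cmat qv) ** matrix_inv (cmat (blk fu fv gu gv)) ** embI))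
             = CARD('r)"
begin

abbreviation "Am \<equiv> cmat (blk fu fv gu gv)"
abbreviation "Qm \<equiv> cmat (blk 0 0 qu qv)"
abbreviation "Ai \<equiv> matrix_inv Am"
abbreviation "Cm \<equiv> rowblk (cmat qu) (cmat qv) ** Ai ** embI"
abbreviation "qvi \<equiv> matrix_inv qv"
abbreviation "DF \<equiv> cmat (dfstar fu fv qu qv)"

lemma Am_inv: "invertible Am"
proof (rule invertible_of_inj)
  fix x assume "Am *v x = 0"
  then have "Am *v x = 0 *s x" by simp
  then show "x = 0" using H1_nonzero unfolding eigvals_def by blast
qed

lemma Am_Ai: "Am *v (Ai *v x) = x" "Ai *v (Am *v x) = x" by (simp_all add: matrix_inv_vec[OF Am_inv])

lemma qv_inv: "invertible qv"
proof (rule invertible_of_inj)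
  fix x assume "qv *v x = 0"
  then have "cmat qv *v cvec x = 0 *s cvec x" by (simp add: cmat_cvec)
  moreover have "0 \<notin> eigvals (cmat qv)" using qv_stable by fastforce
  ultimately have "cvec x = 0" unfolding eigvals_def by blast
  then show "x = 0" by simp
qed

lemma qv_qvi: "qv ** qvi = mat 1" "qvi ** qv = mat 1" by (simp_all add: matrix_inv_props[OF qv_inv])

lemma cqv_inv: "cmat qv ** cmat qvi = mat 1" "cmat qvi ** cmat qv = mat 1"
  by (simp_all add: cmat_mult[symmetric] qv_qvi cmat_one)

lemma cqv_vec: "cmat qv *v (cmat qvi *v x) = x" "cmat qvi *v (cmat qv *v x) = x"
  by (simp_all add: matrix_vector_mul_assoc cqv_inv)

lemma Am_mult: "Am *v V = stack (cmat fu *v upart V + cmat fv *v vpart V) (cmat gu *v upart V + cmat gv *v vpart V)"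
  by (simp add: cmat_blk blk_mult)

lemma Qm_mult: "Qm *v V = stack 0 (cmat qu *v upart V + cmat qv *v vpart V)"
  by (simp add: cmat_blk blk_mult)

lemma upart_Qm[simp]: "upart (Qm *v V) = 0" by (simp add: Qm_mult)
lemma vpart_Qm: "vpart (Qm *v V) = cmat qu *v upart V + cmat qv *v vpart V" by (simp add: Qm_mult)
lemma upart_Am: "upart (Am *v V) = cmat fu *v upart V + cmat fv *v vpart V" by (simp add: Am_mult)
lemma vpart_Am: "vpart (Am *v V) = cmat gu *v upart V + cmat gv *v vpart V" by (simp add: Am_mult)

lemma Qm_stack: "Qm *v V = stack 0 (vpart (Qm *v V))" by (simp add: Qm_mult)

lemma Cm_mult: "Cm *v s = vpart (Qm *v (Ai *v stack 0 s))"
  by (simp add: matrix_vector_mul_assoc[symmetric] embI_mult rowblk_mult vpart_Qm)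

lemma DF_eq: "DF = cmat fu - cmat fv ** cmat qvi ** cmat qu"
  by (simp add: dfstar_def cmat_diff cmat_mult)

definition Lm :: "real^'n^'n" where "Lm = (\<chi> j i. ls j $ i)"
definition Rm :: "real^'n^'n" where "Rm = (\<chi> i k. rs k $ i)"

lemma LR: "Lm ** Rm = mat 1"
  using H2_norm by (simp add: vec_eq_iff Lm_def Rm_def matrix_matrix_mult_def mat_def inner_vec_def)

lemma RL: "Rm ** Lm = mat 1" using LR matrix_left_right_inverse by blast

lemma cRL: "cmat Rm *v (cmat Lm *v x) = x"
  by (simp add: matrix_vector_mul_assoc cmat_mult[symmetric] RL cmat_one)

lemma Lc_nth: "(cmat Lm *v x) $ k = (\<Sum>i\<in>UNIV. complex_of_real (ls k $ i) * x $ i)"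
  by (simp add: Lm_def matrix_vector_mult_def)

lemma Lc_rs: "(cmat Lm *v cvec (rs j)) $ k = (if k = j then 1 else 0)"
proof -
  have "(cmat Lm *v cvec (rs j)) $ k = complex_of_real (ls k \<bullet> rs j)"
    by (simp add: Lc_nth inner_vec_def)
  then show ?thesis using H2_norm by simp
qed

lemma Rc_sum: "cmat Rm *v y = (\<Sum>k\<in>UNIV. y $ k *s cvec (rs k))"
  by (simp add: matrix_mult_sum column_def Rm_def cvec_def)

lemma Lm_df: "Lm ** dfstar fu fv qu qv = (\<chi> k i. a k * Lm $ k $ i)"
proof -
  have "(Lm ** dfstar fu fv qu qv) $ k $ i = (ls k v* dfstar fu fv qu qv) $ i" for k i
    by (simp add: matrix_matrix_mult_def vector_matrix_mult_def Lm_def)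
  then show ?thesis using H2_left by (simp add: vec_eq_iff Lm_def)
qed

lemma Lc_DF: "(cmat Lm *v (DF *v x)) $ k = complex_of_real (a k) * (cmat Lm *v x) $ k"
proof -
  have "cmat Lm *v (DF *v x) = cmat (Lm ** dfstar fu fv qu qv) *v x"
    by (simp add: matrix_vector_mul_assoc cmat_mult)
  also have "\<dots> $ k = complex_of_real (a k) * (cmat Lm *v x) $ k"
    unfolding Lm_df by (simp add: matrix_vector_mult_def sum_distrib_left mult.assoc)
  finally show ?thesis .
qed

lemma DF_rs: "DF *v cvec (rs j) = complex_of_real (a j) *s cvec (rs j)"
  using H2_right by (simp add: cmat_cvec cvec_smult)

lemma Lc_zero: "(\<And>k. (cmat Lm *v x) $ k = 0) \<Longrightarrow> x = 0"
proof -
  assume "\<And>k. (cmat Lm *v x) $ k = 0"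
  then have "cmat Lm *v x = 0" by (simp add: vec_eq_iff)
  then show "x = 0" using cRL[of x] by simp
qed

lemma DF_inj: "DF *v x = 0 \<Longrightarrow> x = 0"
proof -
  assume "DF *v x = 0"
  then have "complex_of_real (a k) * (cmat Lm *v x) $ k = 0" for k using Lc_DF[of x k] by simp
  then show "x = 0" using H2_nonzero by (intro Lc_zero) simp
qed

end


lemma mv_neg: "(M::'a::ring_1^'n^'m) *v (- x) = - (M *v x)"
  by (simp add: vec_eq_iff matrix_vector_mult_def sum_negf)
lemma mneg_v: "(- M::'a::ring_1^'n^'m) *v x = - (M *v x)"
  by (simp add: vec_eq_iff matrix_vector_mult_def sum_negf)

lemmas vsimps = vector_smult_assoc vector_sadd_rdistrib vector_add_ldistrib vector_ssub_ldistrib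
  vector_smult_rneg vector_smult_lneg vector_sub_rdistrib matrix_vector_right_distrib
  matrix_vector_mult_diff_distrib mv_smult matrix_vector_mult_diff_rdistrib
  matrix_vector_mult_add_rdistrib mv_neg mneg_v

lemma basis_of_indep:
  fixes s :: "'r \<Rightarrow> complex^'r::finite"
  assumes ind: "\<And>c. (\<Sum>j\<in>UNIV. c j *s s j) = 0 \<Longrightarrow> \<forall>j. c j = 0"
  shows "\<exists>y. x = (\<Sum>k\<in>UNIV. y k *s s k)"
proof -
  define S :: "complex^'r^'r" where "S = (\<chi> i k. s k $ i)"
  have col: "column k S = s k" for k by (simp add: S_def column_def vec_eq_iff)
  have "\<exists>B. B ** S = mat 1"
    unfolding matrix_left_invertible_independent_columns col using ind by blast
  then have inv: "invertible S" using invertible_left_inverse by blast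
  have "x = S *v (matrix_inv S *v x)" by (simp add: matrix_inv_vec[OF inv])
  also have "\<dots> = (\<Sum>k\<in>UNIV. (matrix_inv S *v x) $ k *s s k)" by (simp add: matrix_mult_sum col)
  finally show ?thesis by blast
qed

context relax
begin

lemma Cm_nz: "Cm *v s = 0 \<Longrightarrow> s = 0"
proof -
  assume Cs: "Cm *v s = 0"
  define W where "W = Ai *v stack 0 s"
  have AW: "Am *v W = stack 0 s" unfolding W_def by (rule Am_Ai(1))
  have "vpart (Qm *v W) = 0" using Cs unfolding Cm_mult W_def .
  then have qe: "cmat qu *v upart W + cmat qv *v vpart W = 0" by (simp add: vpart_Qm)
  then have "cmat qv *v vpart W = - (cmat qu *v upart W)" by (simp add: eq_neg_iff_add_eq_0 add.commute)
  then have v: "vpart W = - (cmat qvi *v (cmat qu *v upart W))" using cqv_vec(2) by (metis mv_neg)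
  have "upart (Am *v W) = 0" using AW by simp
  then have "cmat fu *v upart W + cmat fv *v vpart W = 0" by (simp add: upart_Am)
  then have "DF *v upart W = 0" unfolding DF_eq v
    by (simp add: vsimps matrix_vector_mul_assoc matrix_mul_assoc)
  then have u0: "upart W = 0" by (rule DF_inj)
  then have "vpart W = 0" using v by simp
  with u0 have "W = 0" by (metis stack_parts stack_zero)
  then have "stack 0 s = 0" using AW by simp
  then show "s = 0" by simp
qed

lemma fast_data: "\<exists>(\<gamma>::'r \<Rightarrow> complex) s. inj \<gamma> \<and> (\<forall>j. \<gamma> j \<noteq> 0 \<and> s j \<noteq> 0 \<and> Cm *v s j = \<gamma> j *s s j)"
proof -
  have fin: "finite (eigvals Cm)" using A1 card.infinite by fastforce
  obtain g where g: "bij_betw g (UNIV::'r set) (eigvals Cm)"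
    using finite_same_card_bij[OF finite fin] A1 by auto
  have "\<forall>j. \<exists>v. v \<noteq> 0 \<and> Cm *v v = g j *s v"
    using g unfolding bij_betw_def eigvals_def by blast
  then obtain s where s: "\<And>j. s j \<noteq> 0 \<and> Cm *v s j = g j *s s j" by metis
  have gnz: "g j \<noteq> 0" for j
  proof
    assume "g j = 0"
    then have "Cm *v s j = 0" using s by simp
    then show False using Cm_nz s by blast
  qed
  have "inj g" using g unfolding bij_betw_def by blast
  moreover have "\<forall>j. g j \<noteq> 0 \<and> s j \<noteq> 0 \<and> Cm *v s j = g j *s s j" using s gnz by blast
  ultimately show ?thesis by blast
qed

end


lemma bound_from_quad:
  fixes X :: "complex \<Rightarrow> complex^'m"
  assumes "\<forall>z\<in>ball 0 e. norm (X z - x0 - z *s c) \<le> C * (norm z)^2"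
  shows "\<forall>z\<in>ball 0 e. norm (X z - x0) \<le> (max C 0 * e + norm c) * norm z"
proof
  fix z :: complex assume z: "z \<in> ball 0 e"
  have "norm (X z - x0) \<le> norm (X z - x0 - z *s c) + norm (z *s c)"
    by (metis diff_add_cancel norm_triangle_ineq)
  also have "\<dots> \<le> C * (norm z)^2 + norm z * norm c" using assms z by (simp add: norm_smult_cvec)
  also have "C * (norm z)^2 \<le> max C 0 * e * norm z"
  proof -
    have "C * (norm z)^2 \<le> max C 0 * (norm z)^2" by (intro mult_right_mono) auto
    also have "\<dots> = max C 0 * norm z * norm z" by (simp add: power2_eq_square)
    also have "\<dots> \<le> max C 0 * e * norm z" using z by (intro mult_right_mono mult_left_mono) auto
    finally show ?thesis .
  qed
  finally show "norm (X z - x0) \<le> (max C 0 * e + norm c) * norm z" by (simp add: algebra_simps)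
qed

lemma sum_if_delta:
  fixes s :: "'k::finite \<Rightarrow> complex^'b"
  shows "(\<Sum>k\<in>UNIV. (if k = j then d else 0) *s s k) = d *s s j"
proof -
  have "(\<Sum>k\<in>UNIV. (if k = j then d else 0) *s s k) = (\<Sum>k\<in>UNIV. if k = j then d *s s k else 0)"
    by (rule sum.cong) auto
  also have "\<dots> = d *s s j" by (simp add: sum.delta)
  finally show ?thesis .
qed

context relax
begin

lemma fast_mode:
  fixes \<gamma> :: "'r \<Rightarrow> complex" and s :: "'r \<Rightarrow> complex^'r" and j :: 'r
  assumes gs: "\<forall>j. \<gamma> j \<noteq> 0 \<and> s j \<noteq> 0 \<and> Cm *v s j = \<gamma> j *s s j" and ginj: "inj \<gamma>"
  shows "\<exists>\<epsilon>>0. \<exists>X C. (\<forall>i. (\<lambda>z. X z $ i) holomorphic_on ball 0 \<epsilon>) \<and>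
     (\<forall>z\<in>ball 0 \<epsilon>. Qm *v msnd (X z) - z *s msnd (X z) - mfst (X z) *s (Am *v msnd (X z)) = 0) \<and>
     (\<forall>z\<in>ball 0 \<epsilon>. norm (X z - mk (\<gamma> j) (Ai *v stack 0 (s j))) \<le> C * norm z)"
proof -
  have ind: "\<forall>k. c k = 0" if "(\<Sum>k\<in>UNIV. c k *s s k) = 0" for c
    using eig_indep[of Cm s \<gamma> UNIV c] gs ginj that by auto
  define V0 where "V0 = Ai *v stack 0 (s j)"
  have AV0: "Am *v V0 = stack 0 (s j)" unfolding V0_def by (rule Am_Ai(1))
  have QV0: "Qm *v V0 = \<gamma> j *s stack 0 (s j)"
  proof -
    have "vpart (Qm *v V0) = Cm *v s j" unfolding V0_def Cm_mult ..
    then show ?thesis using gs Qm_stack[of V0] by simp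
  qed
  have V0nz: "V0 \<noteq> 0"
  proof
    assume "V0 = 0"
    then have "stack 0 (s j) = 0" using AV0 by simp
    then show False using gs by simp
  qed
  obtain i0 where i0: "V0 $ i0 \<noteq> 0" using V0nz by (metis vec_eq_iff zero_index)
  define w where "w = inverse (V0 $ i0)"
  have w: "w \<noteq> 0" "V0 $ i0 * w = 1" using i0 unfolding w_def by auto
  define B0 :: "complex^(unit+('n+'r)) \<Rightarrow> complex^(unit+('n+'r)) \<Rightarrow> complex^(unit+('n+'r))"
    where "B0 = (\<lambda>x x'. mk 0 (- (mfst x *s (Am *v msnd x'))))"
  define L0 :: "complex^(unit+('n+'r)) \<Rightarrow> complex^(unit+('n+'r))"
    where "L0 = (\<lambda>x. mk (msnd x $ i0 * w) (Qm *v msnd x))"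
  define f0 :: "complex^(unit+('n+'r))" where "f0 = mk (-1) 0"
  define B1 :: "complex^(unit+('n+'r)) \<Rightarrow> complex^(unit+('n+'r)) \<Rightarrow> complex^(unit+('n+'r))"
    where "B1 = (\<lambda>x x'. 0)"
  define L1 :: "complex^(unit+('n+'r)) \<Rightarrow> complex^(unit+('n+'r))"
    where "L1 = (\<lambda>x. mk 0 (- msnd x))"
  define x0 where "x0 = mk (\<gamma> j) V0"
  have cB0: "cbil B0" unfolding B0_def
    by (intro cbilI clinI) (simp_all add: vsimps algebra_simps)
  have cB1: "cbil B1" unfolding B1_def by (intro cbilI clinI) simp_all
  have cL0: "clin L0" unfolding L0_def
    by (intro clinI) (simp_all add: vsimps algebra_simps)
  have cL1: "clin L1" unfolding L1_def
    by (intro clinI) (simp_all add: vsimps algebra_simps)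
  have F0: "B0 x0 x0 + L0 x0 + f0 = 0"
    unfolding B0_def L0_def f0_def x0_def using w AV0 QV0 by simp
  have inj: "y = 0" if hy: "B0 x0 y + B0 y x0 + L0 y = 0" for y
  proof -
    define dm where "dm = mfst y"
    define dV where "dV = msnd y"
    have "mfst (B0 x0 y + B0 y x0 + L0 y) = 0" using hy by simp
    then have e1: "dV $ i0 * w = 0" unfolding B0_def L0_def dV_def by simp
    have "msnd (B0 x0 y + B0 y x0 + L0 y) = 0" using hy by simp
    then have "- (\<gamma> j *s (Am *v dV)) - dm *s (Am *v V0) + Qm *v dV = 0"
      unfolding B0_def L0_def dV_def dm_def x0_def by simp
    then have e2: "Qm *v dV - \<gamma> j *s (Am *v dV) = dm *s stack 0 (s j)"
      using AV0 by (simp add: algebra_simps)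
    have dV0: "dV $ i0 = 0" using e1 w by simp
    define X' where "X' = Am *v dV"
    have dVX: "dV = Ai *v X'" unfolding X'_def by (simp add: Am_Ai)
    have "upart (Qm *v dV - \<gamma> j *s (Am *v dV)) = upart (dm *s stack 0 (s j))" using e2 by simp
    then have "\<gamma> j *s upart X' = 0" unfolding X'_def by simp
    then have uX: "upart X' = 0" using gs by (simp add: vec_eq_iff)
    define x2 where "x2 = vpart X'"
    have X'st: "X' = stack 0 x2" unfolding x2_def using uX stack_parts[of X'] by simp
    have "vpart (Qm *v dV - \<gamma> j *s (Am *v dV)) = vpart (dm *s stack 0 (s j))" using e2 by simp
    then have "vpart (Qm *v dV) - \<gamma> j *s x2 = dm *s s j" unfolding x2_def X'_def by simp
    moreover have "vpart (Qm *v dV) = Cm *v x2" unfolding Cm_mult dVX X'st ..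
    ultimately have e3: "Cm *v x2 - \<gamma> j *s x2 = dm *s s j" by simp
    obtain yk where yk: "x2 = (\<Sum>k\<in>UNIV. yk k *s s k)" using basis_of_indep[of s x2] ind by blast
    have Cx2: "Cm *v x2 = (\<Sum>k\<in>UNIV. (yk k * \<gamma> k) *s s k)"
      unfolding yk by (simp add: clin_sum[OF clin_matrix] mv_smult gs vector_smult_assoc)
    define cc where "cc = (\<lambda>k. yk k * (\<gamma> k - \<gamma> j) - (if k = j then dm else 0))"
    have "(\<Sum>k\<in>UNIV. cc k *s s k) = (\<Sum>k\<in>UNIV. (yk k * \<gamma> k) *s s k) - \<gamma> j *s x2 - (\<Sum>k\<in>UNIV. (if k = j then dm else 0) *s s k)"
      unfolding cc_def yk by (simp add: vector_sub_rdistrib sum_subtractf smult_sum vector_smult_assoc algebra_simps sum.distrib)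
    also have "\<dots> = 0" unfolding sum_if_delta using e3 Cx2 by simp
    finally have "\<forall>k. cc k = 0" by (rule ind)
    then have dm0: "dm = 0" and ykz: "\<And>k. k \<noteq> j \<Longrightarrow> yk k = 0"
      using ginj unfolding cc_def by (auto dest: spec[of _ j] injD) (metis injD mult_eq_0_iff right_minus_eq)
    have "x2 = (\<Sum>k\<in>UNIV. (if k = j then yk j else 0) *s s k)"
      unfolding yk by (rule sum.cong) (auto simp: ykz)
    then have "x2 = yk j *s s j" by (simp add: sum_if_delta)
    have st: "stack 0 (yk j *s s j) = yk j *s stack 0 (s j)" by simp
    have "Ai *v stack 0 (yk j *s s j) = yk j *s (Ai *v stack 0 (s j))" by (subst st) (rule mv_smult)
    then have "dV = yk j *s V0" unfolding dVX X'st V0_def \<open>x2 = yk j *s s j\<close> .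
    then have "yk j * V0 $ i0 = 0" using dV0 by simp
    then have "yk j = 0" using i0 by simp
    then have "dV = 0" using \<open>dV = yk j *s V0\<close> by simp
    then show "y = 0" using dm0 mk_surj[of y] unfolding dm_def dV_def by simp
  qed
  obtain e X C c where epos: "e > 0" and Xhol: "\<forall>i. (\<lambda>z. X z $ i) holomorphic_on ball 0 e"
    and Xeq: "\<forall>z\<in>ball 0 e. B0 (X z) (X z) + L0 (X z) + f0 + z *s (B1 (X z) (X z) + L1 (X z)) = 0"
    and Xb: "\<forall>z\<in>ball 0 e. norm (X z - x0 - z *s c) \<le> C * (norm z)^2"
    using quad_system[OF cB0 cB1 cL0 cL1 F0 inj] by blast
  have eq: "Qm *v msnd (X z) - z *s msnd (X z) - mfst (X z) *s (Am *v msnd (X z)) = 0" if "z \<in> ball 0 e" for z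
  proof -
    have "msnd (B0 (X z) (X z) + L0 (X z) + f0 + z *s (B1 (X z) (X z) + L1 (X z))) = 0"
      using Xeq that by simp
    then show ?thesis unfolding B0_def L0_def f0_def B1_def L1_def by (simp add: algebra_simps)
  qed
  show ?thesis
    apply (rule exI[of _ e])
    apply (rule conjI[OF epos])
    apply (rule exI[of _ X])
    apply (rule exI[of _ "max C 0 * e + norm c"])
    using Xhol eq bound_from_quad[OF Xb] unfolding x0_def V0_def by blast
qed

end


lemma mv_smult_r: "(M::real^'a^'b) *v (c *s v) = c *s (M *v v)"
  by (simp add: vec_eq_iff matrix_vector_mult_def sum_distrib_left algebra_simps)

context relax
begin

lemma qv_solve: "cmat qu *v u + cmat qv *v v = h \<Longrightarrow> v = cmat qvi *v (h - cmat qu *v u)"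
proof -
  assume "cmat qu *v u + cmat qv *v v = h"
  then have "cmat qv *v v = h - cmat qu *v u" by (simp add: algebra_simps)
  then have "cmat qvi *v (cmat qv *v v) = cmat qvi *v (h - cmat qu *v u)" by simp
  then show ?thesis by (simp add: cqv_vec)
qed

lemma DF_comb: "cmat fu *v u + cmat fv *v (cmat qvi *v (h - cmat qu *v u)) = DF *v u + cmat fv *v (cmat qvi *v h)"
  unfolding DF_eq by (simp add: vsimps matrix_vector_mul_assoc matrix_mul_assoc algebra_simps)

lemma Lc_lin: "(cmat Lm *v (x + y)) $ k = (cmat Lm *v x) $ k + (cmat Lm *v y) $ k"
  "(cmat Lm *v (c *s x)) $ k = c * (cmat Lm *v x) $ k"
  "(cmat Lm *v (- x)) $ k = - (cmat Lm *v x) $ k"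
  by (simp_all add: vsimps)

lemma Lm_nth: "(Lm *v x) $ k = ls k \<bullet> x"
  by (simp add: Lm_def matrix_vector_mult_def inner_vec_def)

lemma Lc_cvec: "(cmat Lm *v cvec x) $ k = complex_of_real (ls k \<bullet> x)"
  by (simp add: Lc_nth inner_vec_def)

lemma real_beta:
  fixes j :: 'n
  defines "v0r \<equiv> - (qvi ** qu) *v rs j"
  defines "hr \<equiv> (- 1 / a j) *s (gu *v rs j + gv *v v0r) + v0r"
  shows "Bstar fu fv gu gv qu qv *v rs j = a j *s (fv *v (qvi *v hr))"
proof -
  have aj: "a j \<noteq> 0" using H2_nonzero by blast
  have df: "dfstar fu fv qu qv *v rs j = a j *s rs j" using H2_right by blast
  have v0: "qvi *v (qu *v rs j) = - v0r" unfolding v0r_def by (simp add: mneg_v matrix_vector_mul_assoc)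
  have "Bstar fu fv gu gv qu qv *v rs j
      = - (fv *v (qvi *v (gu *v rs j - gv *v (qvi *v (qu *v rs j)) + qvi *v (qu *v (dfstar fu fv qu qv *v rs j)))))"
    unfolding Bstar_def by (simp add: mneg_v matrix_vector_mul_assoc[symmetric] vsimps)
  also have "\<dots> = - (fv *v (qvi *v (gu *v rs j + gv *v v0r - a j *s v0r)))"
    unfolding df by (simp add: v0 vsimps mv_smult_r)
  also have "gu *v rs j + gv *v v0r - a j *s v0r = (- a j) *s hr"
    unfolding hr_def using aj by (simp add: vsimps vec_eq_iff field_simps)
  finally show ?thesis by (simp add: vsimps mv_smult_r)
qed

lemma slow_mode:
  fixes j :: 'n
  defines "\<nu>0 \<equiv> - 1 / complex_of_real (a j)"
  defines "c\<nu> \<equiv> complex_of_real (ls j \<bullet> (Bstar fu fv gu gv qu qv *v rs j)) / complex_of_real (a j) ^ 3"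
  defines "R0 \<equiv> cvec (stack (rs j) (- (qvi ** qu) *v rs j))"
  shows "\<exists>\<epsilon>>0. \<exists>X C. (\<forall>i. (\<lambda>z. X z $ i) holomorphic_on ball 0 \<epsilon>) \<and>
     (\<forall>z\<in>ball 0 \<epsilon>. Qm *v msnd (X z) - z *s msnd (X z) - (z * mfst (X z)) *s (Am *v msnd (X z)) = 0) \<and>
     (\<forall>z\<in>ball 0 \<epsilon>. norm (X z - mk \<nu>0 R0) \<le> C * norm z) \<and>
     (\<forall>z\<in>ball 0 \<epsilon>. norm (mfst (X z) - \<nu>0 - z * c\<nu>) \<le> C * (norm z)^2)"
proof -
  have aj: "complex_of_real (a j) \<noteq> 0" using H2_nonzero by simp
  have nua: "\<nu>0 * complex_of_real (a j) = -1" unfolding \<nu>0_def using aj by simp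
  define v0r where "v0r = - (qvi ** qu) *v rs j"
  define r where "r = cvec (rs j)"
  have R0st: "R0 = stack r (cvec v0r)" unfolding R0_def r_def v0r_def by (simp add: cvec_stack)
  have uR0[simp]: "upart R0 = r" and vR0[simp]: "vpart R0 = cvec v0r" unfolding R0st by simp_all
  have qv0: "qu *v rs j + qv *v v0r = 0"
  proof -
    have "qv *v ((qvi ** qu) *v rs j) = (qv ** (qvi ** qu)) *v rs j" by (rule matrix_vector_mul_assoc)
    also have "\<dots> = qu *v rs j" by (simp add: matrix_mul_assoc qv_qvi)
    finally show ?thesis unfolding v0r_def by (simp add: mneg_v mv_neg)
  qed
  have QR0: "vpart (Qm *v R0) = 0"
    unfolding vpart_Qm uR0 vR0 r_def by (simp add: cmat_cvec cvec_add[symmetric] qv0)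
  have dfr: "fu *v rs j + fv *v v0r = a j *s rs j"
  proof -
    have "fu *v rs j + fv *v v0r = dfstar fu fv qu qv *v rs j"
      unfolding v0r_def dfstar_def by (simp add: mneg_v mv_neg matrix_vector_mul_assoc matrix_mul_assoc matrix_vector_mult_diff_rdistrib)
    then show ?thesis using H2_right by simp
  qed
  have AR0: "upart (Am *v R0) = complex_of_real (a j) *s r"
    unfolding upart_Am uR0 vR0 r_def by (simp add: cmat_cvec cvec_add[symmetric] dfr cvec_smult)
  have lr: "(cmat Lm *v r) $ k = (if k = j then 1 else 0)" for k unfolding r_def by (rule Lc_rs)
  define B0 :: "complex^(unit+('n+'r)) \<Rightarrow> complex^(unit+('n+'r)) \<Rightarrow> complex^(unit+('n+'r))"
    where "B0 = (\<lambda>x x'. mk 0 (stack (mfst x *s upart (Am *v msnd x')) 0))"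
  define L0 :: "complex^(unit+('n+'r)) \<Rightarrow> complex^(unit+('n+'r))"
    where "L0 = (\<lambda>x. mk ((cmat Lm *v upart (msnd x)) $ j) (stack (upart (msnd x)) (vpart (Qm *v msnd x))))"
  define f0 :: "complex^(unit+('n+'r))" where "f0 = mk (-1) 0"
  define B1 :: "complex^(unit+('n+'r)) \<Rightarrow> complex^(unit+('n+'r)) \<Rightarrow> complex^(unit+('n+'r))"
    where "B1 = (\<lambda>x x'. mk 0 (stack 0 (- (mfst x *s vpart (Am *v msnd x')))))"
  define L1 :: "complex^(unit+('n+'r)) \<Rightarrow> complex^(unit+('n+'r))"
    where "L1 = (\<lambda>x. mk 0 (stack 0 (- vpart (msnd x))))"
  define x0 where "x0 = mk \<nu>0 R0"
  have cB0: "cbil B0" unfolding B0_def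
    by (intro cbilI clinI) (simp_all add: vsimps algebra_simps)
  have cB1: "cbil B1" unfolding B1_def
    by (intro cbilI clinI) (simp_all add: vsimps algebra_simps)
  have cL0: "clin L0" unfolding L0_def
    by (intro clinI) (simp_all add: vsimps algebra_simps)
  have cL1: "clin L1" unfolding L1_def
    by (intro clinI) (simp_all add: vsimps algebra_simps)
  have F0: "B0 x0 x0 + L0 x0 + f0 = 0"
  proof -
    have "(\<nu>0 * complex_of_real (a j)) *s r + r = 0" unfolding nua by (simp add: vec_eq_iff)
    then show ?thesis unfolding B0_def L0_def f0_def x0_def using lr[of j] QR0
      by (simp add: AR0 vector_smult_assoc)
  qed
  have inj: "y = 0" if hy: "B0 x0 y + B0 y x0 + L0 y = 0" for y
  proof -
    define dm where "dm = mfst y"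
    define dV where "dV = msnd y"
    define du where "du = upart dV"
    define dv where "dv = vpart dV"
    have "mfst (B0 x0 y + B0 y x0 + L0 y) = 0" using hy by simp
    then have e1: "(cmat Lm *v du) $ j = 0" unfolding B0_def L0_def du_def dV_def by simp
    have "msnd (B0 x0 y + B0 y x0 + L0 y) = 0" using hy by simp
    then have e2: "stack (\<nu>0 *s upart (Am *v dV) + dm *s upart (Am *v R0) + du) (vpart (Qm *v dV)) = 0"
      unfolding B0_def L0_def dV_def dm_def x0_def du_def by (simp add: algebra_simps)
    have "cmat qu *v du + cmat qv *v dv = 0" using e2 unfolding du_def dv_def by (simp add: vpart_Qm)
    then have dv: "dv = cmat qvi *v (0 - cmat qu *v du)" by (rule qv_solve)
    have "upart (Am *v dV) = DF *v du"
      unfolding upart_Am du_def[symmetric] dv_def[symmetric] dv using DF_comb[of du 0] by simp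
    then have e3: "\<nu>0 *s (DF *v du) + (dm * complex_of_real (a j)) *s r + du = 0"
      using e2 by (simp add: AR0 vector_smult_assoc)
    have ck: "\<nu>0 * (complex_of_real (a k) * (cmat Lm *v du) $ k) + dm * complex_of_real (a j) * (if k = j then 1 else 0)
          + (cmat Lm *v du) $ k = 0" for k
    proof -
      have "(cmat Lm *v (\<nu>0 *s (DF *v du) + (dm * complex_of_real (a j)) *s r + du)) $ k = 0" using e3 by simp
      then show ?thesis by (simp add: Lc_lin Lc_DF lr)
    qed
    have dm0: "dm = 0" using ck[of j] e1 aj by simp
    have "(cmat Lm *v du) $ k = 0" for k
    proof (cases "k = j")
      case True then show ?thesis using e1 by simp
    next
      case False
      have "(\<nu>0 * complex_of_real (a k) + 1) * (cmat Lm *v du) $ k = 0"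
        using ck[of k] False by (simp add: algebra_simps)
      moreover have "\<nu>0 * complex_of_real (a k) + 1 \<noteq> 0"
      proof
        assume "\<nu>0 * complex_of_real (a k) + 1 = 0"
        then have "complex_of_real (a k) = complex_of_real (a j)" unfolding \<nu>0_def using aj
          by (simp add: field_simps)
        then have "a k = a j" by simp
        then show False using H2_distinct False by (metis injD)
      qed
      ultimately show ?thesis by simp
    qed
    then have du0: "du = 0" by (rule Lc_zero)
    then have "dv = 0" using dv by simp
    then have "dV = 0" using du0 stack_parts[of dV] unfolding du_def dv_def by simp
    then show "y = 0" using dm0 mk_surj[of y] unfolding dm_def dV_def by simp
  qed
  obtain e X C c where epos: "e > 0" and Xhol: "\<forall>i. (\<lambda>z. X z $ i) holomorphic_on ball 0 e"
    and Xeq: "\<forall>z\<in>ball 0 e. B0 (X z) (X z) + L0 (X z) + f0 + z *s (B1 (X z) (X z) + L1 (X z)) = 0"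
    and Jc: "B0 x0 c + B0 c x0 + L0 c + (B1 x0 x0 + L1 x0) = 0"
    and Xb: "\<forall>z\<in>ball 0 e. norm (X z - x0 - z *s c) \<le> C * (norm z)^2"
    using quad_system[OF cB0 cB1 cL0 cL1 F0 inj] by blast
  have eq: "Qm *v msnd (X z) - z *s msnd (X z) - (z * mfst (X z)) *s (Am *v msnd (X z)) = 0" if "z \<in> ball 0 e" for z
  proof -
    define V where "V = msnd (X z)"
    define m where "m = mfst (X z)"
    have "msnd (B0 (X z) (X z) + L0 (X z) + f0 + z *s (B1 (X z) (X z) + L1 (X z))) = 0"
      using Xeq that by simp
    then have h: "stack (m *s upart (Am *v V) + upart V) (vpart (Qm *v V) - z *s vpart V - (z * m) *s vpart (Am *v V)) = 0"
      unfolding B0_def L0_def f0_def B1_def L1_def V_def m_def by (simp add: algebra_simps vector_smult_assoc)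
    have "Qm *v V - z *s V - (z * m) *s (Am *v V)
        = stack (- z *s (m *s upart (Am *v V) + upart V)) (vpart (Qm *v V) - z *s vpart V - (z * m) *s vpart (Am *v V))"
      by (subst (1 2 3) stack_parts[symmetric]) (simp add: vsimps algebra_simps)
    also have "\<dots> = 0" using h by simp
    finally show ?thesis unfolding V_def m_def .
  qed
  have cnu: "mfst c = c\<nu>"
  proof -
    define cV where "cV = msnd c"
    define cu where "cu = upart cV"
    define cm where "cm = mfst c"
    define hh where "hh = \<nu>0 *s vpart (Am *v R0) + vpart R0"
    have "msnd (B0 x0 c + B0 c x0 + L0 c + (B1 x0 x0 + L1 x0)) = 0" using Jc by simp
    then have h: "stack (\<nu>0 *s upart (Am *v cV) + cm *s upart (Am *v R0) + cu) (vpart (Qm *v cV) - hh) = 0"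
      unfolding B0_def L0_def B1_def L1_def x0_def cV_def cm_def cu_def hh_def by (simp add: algebra_simps)
    have "cmat qu *v cu + cmat qv *v vpart cV = hh" using h unfolding cu_def by (simp add: vpart_Qm)
    then have cv: "vpart cV = cmat qvi *v (hh - cmat qu *v cu)" by (rule qv_solve)
    have "upart (Am *v cV) = DF *v cu + cmat fv *v (cmat qvi *v hh)"
      unfolding upart_Am cu_def[symmetric] cv by (rule DF_comb)
    then have e3: "\<nu>0 *s (DF *v cu + cmat fv *v (cmat qvi *v hh)) + (cm * complex_of_real (a j)) *s r + cu = 0"
      using h by (simp add: AR0 vector_smult_assoc)
    have "(cmat Lm *v (\<nu>0 *s (DF *v cu + cmat fv *v (cmat qvi *v hh)) + (cm * complex_of_real (a j)) *s r + cu)) $ j = 0"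
      using e3 by simp
    then have "\<nu>0 * (complex_of_real (a j) * (cmat Lm *v cu) $ j + (cmat Lm *v (cmat fv *v (cmat qvi *v hh))) $ j)
        + cm * complex_of_real (a j) + (cmat Lm *v cu) $ j = 0"
      by (simp add: Lc_lin Lc_DF lr distrib_left)
    moreover have "\<nu>0 * (complex_of_real (a j) * (cmat Lm *v cu) $ j) = - (cmat Lm *v cu) $ j"
      using nua by (metis mult.assoc mult_minus1)
    ultimately have e4: "\<nu>0 * (cmat Lm *v (cmat fv *v (cmat qvi *v hh))) $ j + cm * complex_of_real (a j) = 0"
      by (simp add: distrib_left)
    define hr where "hr = (- 1 / a j) *s (gu *v rs j + gv *v v0r) + v0r"
    have hh: "hh = cvec hr"
    proof -
      have "vpart (Am *v R0) = cvec (gu *v rs j + gv *v v0r)"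
        unfolding vpart_Am uR0 vR0 r_def by (simp add: cmat_cvec cvec_add)
      then show ?thesis unfolding hh_def hr_def \<nu>0_def
        by (simp add: cvec_add cvec_smult cvec_diff cvec_neg of_real_divide)
    qed
    have lsb: "(cmat Lm *v (cmat fv *v (cmat qvi *v hh))) $ j
        = complex_of_real (ls j \<bullet> (Bstar fu fv gu gv qu qv *v rs j)) / complex_of_real (a j)"
    proof -
      have "(cmat Lm *v (cmat fv *v (cmat qvi *v hh))) $ j = complex_of_real (ls j \<bullet> (fv *v (qvi *v hr)))"
        unfolding hh by (simp add: cmat_cvec Lm_nth)
      moreover have "ls j \<bullet> (Bstar fu fv gu gv qu qv *v rs j) = a j * (ls j \<bullet> (fv *v (qvi *v hr)))"
        unfolding real_beta hr_def v0r_def by (simp add: inner_vec_def sum_distrib_left algebra_simps)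
      ultimately show ?thesis using aj by simp
    qed
    show ?thesis using e4 unfolding lsb c\<nu>_def cm_def[symmetric] \<nu>0_def using aj
      by (simp add: field_simps power3_eq_cube)
  qed
  have b1: "\<forall>z\<in>ball 0 e. norm (X z - x0) \<le> (max C 0 * e + norm c) * norm z"
    by (rule bound_from_quad[OF Xb])
  have b2: "\<forall>z\<in>ball 0 e. norm (mfst (X z) - \<nu>0 - z * c\<nu>) \<le> C * (norm z)^2"
  proof
    fix z :: complex assume z: "z \<in> ball 0 e"
    have "mfst (X z) - \<nu>0 - z * c\<nu> = mfst (X z - x0 - z *s c)" unfolding x0_def cnu[symmetric] by simp
    then have "norm (mfst (X z) - \<nu>0 - z * c\<nu>) \<le> norm (X z - x0 - z *s c)" by (metis norm_mfst)
    then show "norm (mfst (X z) - \<nu>0 - z * c\<nu>) \<le> C * (norm z)^2" using Xb z by (meson order_trans)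
  qed
  define C' where "C' = max (max C 0 * e + norm c) C"
  have b1': "\<forall>z\<in>ball 0 e. norm (X z - mk \<nu>0 R0) \<le> C' * norm z"
    using b1 unfolding x0_def C'_def by (meson max.cobounded1 mult_right_mono norm_ge_zero order_trans)
  have b2': "\<forall>z\<in>ball 0 e. norm (mfst (X z) - \<nu>0 - z * c\<nu>) \<le> C' * (norm z)^2"
    using b2 unfolding C'_def by (meson max.cobounded2 mult_right_mono zero_le_power2 order_trans)
  show ?thesis
    apply (rule exI[of _ e])
    apply (rule conjI[OF epos])
    apply (rule exI[of _ X])
    apply (rule exI[of _ C'])
    using Xhol eq b1' b2' by blast
qed

end


lemma bigo_ball:
  fixes f g :: "complex \<Rightarrow> 'a::real_normed_field"
  assumes "e > 0" "\<forall>z\<in>ball 0 e. norm (f z) \<le> C * norm (g z)"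
  shows "f \<in> O[at 0](g)"
proof (rule bigoI)
  show "eventually (\<lambda>x. norm (f x) \<le> C * norm (g x)) (at 0)"
    using eventually_at_ball[OF assms(1), of 0 UNIV] assms(2) by (auto elim: eventually_mono)
qed

definition swp :: "'n + 'r \<Rightarrow> 'r + 'n" where "swp x = (case x of Inl a \<Rightarrow> Inr a | Inr b \<Rightarrow> Inl b)"

lemma bij_swp: "bij swp"
proof (rule bijI)
  show "inj swp" unfolding inj_def swp_def by (auto split: sum.splits)
  show "surj swp" unfolding surj_def swp_def by (metis sum.case(1) sum.case(2) sum.exhaust)
qed

lemma swp_simps[simp]: "swp (Inl a) = Inr a" "swp (Inr b) = Inl b" by (simp_all add: swp_def)

context relax
begin

lemma QV0_gen: "Cm *v s = g *s s \<Longrightarrow> Qm *v (Ai *v stack 0 s) = g *s stack 0 s"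
proof -
  assume h: "Cm *v s = g *s s"
  have "vpart (Qm *v (Ai *v stack 0 s)) = Cm *v s" unfolding Cm_mult ..
  then show ?thesis using h Qm_stack[of "Ai *v stack 0 s"] by simp
qed

lemma QR0_gen: "Qm *v cvec (stack (rs j) (- (qvi ** qu) *v rs j)) = 0"
proof -
  have "qv *v ((qvi ** qu) *v rs j) = (qv ** (qvi ** qu)) *v rs j" by (rule matrix_vector_mul_assoc)
  also have "\<dots> = qu *v rs j" by (simp add: matrix_mul_assoc qv_qvi)
  finally have "qu *v rs j + qv *v (- (qvi ** qu) *v rs j) = 0" by (simp add: mneg_v mv_neg)
  then show ?thesis by (simp add: Qm_mult cvec_stack cmat_cvec cvec_add[symmetric])
qed

end

theorem lemma5p1:
  fixes fu :: "real^'n::finite^'n" and fv :: "real^'r::finite^'n"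
    and gu :: "real^'n^'r" and gv :: "real^'r^'r"
    and qu :: "real^'n^'r" and qv :: "real^'r^'r"
    and a :: "'n \<Rightarrow> real" and rs :: "'n \<Rightarrow> real^'n" and ls :: "'n \<Rightarrow> real^'n"
  assumes H1_real: "\<forall>\<sigma>\<in>eigvals (cmat (blk fu fv gu gv)). \<sigma> \<in> \<real>"
    and H1_semisimple: "semisimple (cmat (blk fu fv gu gv))"
    and H1_nonzero: "0 \<notin> eigvals (cmat (blk fu fv gu gv))"
    and qv_stable: "\<forall>\<sigma>\<in>eigvals (cmat qv). Re \<sigma> < 0"
    and H2_distinct: "inj a"
    and H2_nonzero: "\<forall>j. a j \<noteq> 0"
    and H2_right: "\<forall>j. dfstar fu fv qu qv *v rs j = a j *s rs j"
    and H2_left: "\<forall>j. ls j v* dfstar fu fv qu qv = a j *s ls j"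
    and H2_norm: "\<forall>j k. ls j \<bullet> rs k = (if j = k then 1 else 0)"
    and H3: "\<exists>\<theta>>0. \<forall>\<xi>::real. \<forall>\<sigma>\<in>eigvals (\<chi> i j. \<i> * complex_of_real \<xi> * cmat (blk fu fv gu gv) $ i $ j
                                              + cmat (blk 0 0 qu qv) $ i $ j).
               Re \<sigma> \<le> - \<theta> * \<xi>\<^sup>2 / (1 + \<xi>\<^sup>2)"
    and A1: "card (eigvals (rowblk (cmat qu) (cmat qv) ** matrix_inv (cmat (blk fu fv gu gv)) ** embI))
             = CARD('r)"
  shows "\<exists>\<epsilon>>0. \<exists>(\<mu> :: 'r + 'n \<Rightarrow> complex \<Rightarrow> complex) (V :: 'r + 'n \<Rightarrow> complex \<Rightarrow> complex^('n+'r))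
            (\<gamma> :: 'r \<Rightarrow> complex) (s :: 'r \<Rightarrow> complex^'r).
     (\<forall>k. \<mu> k analytic_on ball 0 \<epsilon>) \<and>
     (\<forall>k i. (\<lambda>z. V k z $ i) analytic_on ball 0 \<epsilon>) \<and>
     (\<forall>lam\<in>ball 0 \<epsilon>.
        (\<forall>k. (\<lambda>x. exp (\<mu> k lam * complex_of_real x) *s V k lam)
               \<in> odesols (cmat (blk fu fv gu gv)) (cmat (blk 0 0 qu qv)) lam) \<and>
        (\<forall>c. (\<forall>x. (\<Sum>k\<in>UNIV. c k *s (exp (\<mu> k lam * complex_of_real x) *s V k lam)) = 0)
              \<longrightarrow> (\<forall>k. c k = 0)) \<and>
        (\<forall>W\<in>odesols (cmat (blk fu fv gu gv)) (cmat (blk 0 0 qu qv)) lam.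
           \<exists>c. \<forall>x. W x = (\<Sum>k\<in>UNIV. c k *s (exp (\<mu> k lam * complex_of_real x) *s V k lam)))) \<and>
     inj \<gamma> \<and>
     (\<forall>j. \<gamma> j \<noteq> 0 \<and> s j \<noteq> 0 \<and>
          (rowblk (cmat qu) (cmat qv) ** matrix_inv (cmat (blk fu fv gu gv)) ** embI) *v s j
            = \<gamma> j *s s j) \<and>
     (\<forall>j. (\<lambda>z. \<mu> (Inl j) z - \<gamma> j) \<in> O[at 0](\<lambda>z. z)) \<and>
     (\<forall>j. (\<lambda>z. norm (V (Inl j) z - matrix_inv (cmat (blk fu fv gu gv)) *v stack 0 (s j)))
            \<in> O[at 0](\<lambda>z. norm z)) \<and>
     (\<forall>j. (\<lambda>z. \<mu> (Inr j) z - (- z / complex_of_real (a j)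
               + z\<^sup>2 * complex_of_real (ls j \<bullet> (Bstar fu fv gu gv qu qv *v rs j))
                 / complex_of_real (a j) ^ 3))
            \<in> O[at 0](\<lambda>z. z ^ 3)) \<and>
     (\<forall>j. (\<lambda>z. norm (V (Inr j) z - cvec (stack (rs j) (- (matrix_inv qv ** qu) *v rs j))))
            \<in> O[at 0](\<lambda>z. norm z))"
proof -
  interpret relax fu fv gu gv qu qv a rs ls
    by (intro relax.intro H1_nonzero qv_stable H2_distinct H2_nonzero H2_right H2_left H2_norm A1)
  obtain \<gamma> :: "'r \<Rightarrow> complex" and s :: "'r \<Rightarrow> complex^'r" where ginj: "inj \<gamma>" and gs: "\<forall>j. \<gamma> j \<noteq> 0 \<and> s j \<noteq> 0 \<and> Cm *v s j = \<gamma> j *s s j"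
    using fast_data by blast
  have ind: "\<forall>k. c k = 0" if "(\<Sum>k\<in>UNIV. c k *s s k) = 0" for c
    using eig_indep[of Cm s \<gamma> UNIV c] gs ginj that by auto
  have "\<forall>j. \<exists>e. \<exists>X. \<exists>C. e > 0 \<and> (\<forall>i. (\<lambda>z. X z $ i) holomorphic_on ball 0 e) \<and>
     (\<forall>z\<in>ball 0 e. Qm *v msnd (X z) - z *s msnd (X z) - mfst (X z) *s (Am *v msnd (X z)) = 0) \<and>
     (\<forall>z\<in>ball 0 e. norm (X z - mk (\<gamma> j) (Ai *v stack 0 (s j))) \<le> C * norm z)"
    using fast_mode[OF gs ginj] by blast
  from choice[OF this] obtain ef where "\<forall>j. \<exists>X. \<exists>C. ef j > 0 \<and> (\<forall>i. (\<lambda>z. X z $ i) holomorphic_on ball 0 (ef j)) \<and>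
     (\<forall>z\<in>ball 0 (ef j). Qm *v msnd (X z) - z *s msnd (X z) - mfst (X z) *s (Am *v msnd (X z)) = 0) \<and>
     (\<forall>z\<in>ball 0 (ef j). norm (X z - mk (\<gamma> j) (Ai *v stack 0 (s j))) \<le> C * norm z)" by blast
  from choice[OF this] obtain Xf where "\<forall>j. \<exists>C. ef j > 0 \<and> (\<forall>i. (\<lambda>z. Xf j z $ i) holomorphic_on ball 0 (ef j)) \<and>
     (\<forall>z\<in>ball 0 (ef j). Qm *v msnd (Xf j z) - z *s msnd (Xf j z) - mfst (Xf j z) *s (Am *v msnd (Xf j z)) = 0) \<and>
     (\<forall>z\<in>ball 0 (ef j). norm (Xf j z - mk (\<gamma> j) (Ai *v stack 0 (s j))) \<le> C * norm z)" by blast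
  from choice[OF this] obtain Cf where F: "\<And>j. ef j > 0 \<and> (\<forall>i. (\<lambda>z. Xf j z $ i) holomorphic_on ball 0 (ef j)) \<and>
     (\<forall>z\<in>ball 0 (ef j). Qm *v msnd (Xf j z) - z *s msnd (Xf j z) - mfst (Xf j z) *s (Am *v msnd (Xf j z)) = 0) \<and>
     (\<forall>z\<in>ball 0 (ef j). norm (Xf j z - mk (\<gamma> j) (Ai *v stack 0 (s j))) \<le> Cf j * norm z)" by blast
  define \<nu>0 where "\<nu>0 = (\<lambda>j. - 1 / complex_of_real (a j))"
  define c\<nu> where "c\<nu> = (\<lambda>j. complex_of_real (ls j \<bullet> (Bstar fu fv gu gv qu qv *v rs j)) / complex_of_real (a j) ^ 3)"
  define R0 where "R0 = (\<lambda>j. cvec (stack (rs j) (- (qvi ** qu) *v rs j)))"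
  have "\<forall>j. \<exists>e. \<exists>X. \<exists>C. e > 0 \<and> (\<forall>i. (\<lambda>z. X z $ i) holomorphic_on ball 0 e) \<and>
     (\<forall>z\<in>ball 0 e. Qm *v msnd (X z) - z *s msnd (X z) - (z * mfst (X z)) *s (Am *v msnd (X z)) = 0) \<and>
     (\<forall>z\<in>ball 0 e. norm (X z - mk (\<nu>0 j) (R0 j)) \<le> C * norm z) \<and>
     (\<forall>z\<in>ball 0 e. norm (mfst (X z) - \<nu>0 j - z * c\<nu> j) \<le> C * (norm z)^2)"
    using slow_mode unfolding \<nu>0_def c\<nu>_def R0_def by blast
  from choice[OF this] obtain es where "\<forall>j. \<exists>X. \<exists>C. es j > 0 \<and> (\<forall>i. (\<lambda>z. X z $ i) holomorphic_on ball 0 (es j)) \<and>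
     (\<forall>z\<in>ball 0 (es j). Qm *v msnd (X z) - z *s msnd (X z) - (z * mfst (X z)) *s (Am *v msnd (X z)) = 0) \<and>
     (\<forall>z\<in>ball 0 (es j). norm (X z - mk (\<nu>0 j) (R0 j)) \<le> C * norm z) \<and>
     (\<forall>z\<in>ball 0 (es j). norm (mfst (X z) - \<nu>0 j - z * c\<nu> j) \<le> C * (norm z)^2)" by blast
  from choice[OF this] obtain Xs where "\<forall>j. \<exists>C. es j > 0 \<and> (\<forall>i. (\<lambda>z. Xs j z $ i) holomorphic_on ball 0 (es j)) \<and>
     (\<forall>z\<in>ball 0 (es j). Qm *v msnd (Xs j z) - z *s msnd (Xs j z) - (z * mfst (Xs j z)) *s (Am *v msnd (Xs j z)) = 0) \<and>
     (\<forall>z\<in>ball 0 (es j). norm (Xs j z - mk (\<nu>0 j) (R0 j)) \<le> C * norm z) \<and>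
     (\<forall>z\<in>ball 0 (es j). norm (mfst (Xs j z) - \<nu>0 j - z * c\<nu> j) \<le> C * (norm z)^2)" by blast
  from choice[OF this] obtain Cs where S: "\<And>j. es j > 0 \<and> (\<forall>i. (\<lambda>z. Xs j z $ i) holomorphic_on ball 0 (es j)) \<and>
     (\<forall>z\<in>ball 0 (es j). Qm *v msnd (Xs j z) - z *s msnd (Xs j z) - (z * mfst (Xs j z)) *s (Am *v msnd (Xs j z)) = 0) \<and>
     (\<forall>z\<in>ball 0 (es j). norm (Xs j z - mk (\<nu>0 j) (R0 j)) \<le> Cs j * norm z) \<and>
     (\<forall>z\<in>ball 0 (es j). norm (mfst (Xs j z) - \<nu>0 j - z * c\<nu> j) \<le> Cs j * (norm z)^2)" by blast
  define e1 where "e1 = min (Min (range ef)) (Min (range es))"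
  have e1pos: "e1 > 0" unfolding e1_def using F S by (simp add: Min_gr_iff)
  have e1f: "e1 \<le> ef j" for j unfolding e1_def by (meson Min_le finite min.coboundedI1 rangeI finite_imageI)
  have e1s: "e1 \<le> es j" for j unfolding e1_def by (meson Min_le finite min.coboundedI2 rangeI finite_imageI)
  have subf: "ball 0 e1 \<subseteq> ball 0 (ef j)" for j using e1f[of j] by auto
  have subs: "ball 0 e1 \<subseteq> ball 0 (es j)" for j using e1s[of j] by auto
  define \<mu> :: "'r + 'n \<Rightarrow> complex \<Rightarrow> complex"
    where "\<mu> = (\<lambda>k z. case k of Inl j \<Rightarrow> mfst (Xf j z) | Inr j \<Rightarrow> z * mfst (Xs j z))"
  define V :: "'r + 'n \<Rightarrow> complex \<Rightarrow> complex^('n+'r)"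
    where "V = (\<lambda>k z. case k of Inl j \<Rightarrow> msnd (Xf j z) | Inr j \<Rightarrow> msnd (Xs j z))"
  have Vhol: "(\<lambda>z. V k z $ i) holomorphic_on ball 0 e1" for k i
  proof (cases k)
    case (Inl j)
    have "(\<lambda>z. Xf j z $ Inr i) holomorphic_on ball 0 e1" using F[of j] subf[of j] holomorphic_on_subset by blast
    then show ?thesis using Inl by (simp add: V_def msnd_def)
  next
    case (Inr j)
    have "(\<lambda>z. Xs j z $ Inr i) holomorphic_on ball 0 e1" using S[of j] subs[of j] holomorphic_on_subset by blast
    then show ?thesis using Inr by (simp add: V_def msnd_def)
  qed
  have muhol: "\<mu> k holomorphic_on ball 0 e1" for k
  proof (cases k)
    case (Inl j)
    have "(\<lambda>z. Xf j z $ Inl ()) holomorphic_on ball 0 e1" using F[of j] subf[of j] holomorphic_on_subset by blast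
    then show ?thesis using Inl by (simp add: \<mu>_def mfst_def)
  next
    case (Inr j)
    have "(\<lambda>z. Xs j z $ Inl ()) holomorphic_on ball 0 e1" using S[of j] subs[of j] holomorphic_on_subset by blast
    then have "(\<lambda>z. z * Xs j z $ Inl ()) holomorphic_on ball 0 e1" by (intro holomorphic_intros)
    then show ?thesis using Inr by (simp add: \<mu>_def mfst_def [abs_def])
  qed
  have eig: "Qm *v V k z - z *s V k z - \<mu> k z *s (Am *v V k z) = 0" if "z \<in> ball 0 e1" for k z
  proof (cases k)
    case (Inl j)
    have "z \<in> ball 0 (ef j)" using subf[of j] that by blast
    then have "Qm *v msnd (Xf j z) - z *s msnd (Xf j z) - mfst (Xf j z) *s (Am *v msnd (Xf j z)) = 0"
      using F[of j] by blast
    then show ?thesis using Inl by (simp add: V_def \<mu>_def)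
  next
    case (Inr j)
    have "z \<in> ball 0 (es j)" using subs[of j] that by blast
    then have "Qm *v msnd (Xs j z) - z *s msnd (Xs j z) - (z * mfst (Xs j z)) *s (Am *v msnd (Xs j z)) = 0"
      using S[of j] by blast
    then show ?thesis using Inr by (simp add: V_def \<mu>_def)
  qed
  have Xf0: "Xf j 0 = mk (\<gamma> j) (Ai *v stack 0 (s j))" for j
  proof -
    have "(0::complex) \<in> ball 0 (ef j)" using F[of j] by simp
    then have "norm (Xf j 0 - mk (\<gamma> j) (Ai *v stack 0 (s j))) \<le> Cf j * norm (0::complex)"
      using F[of j] by blast
    then show ?thesis by simp
  qed
  have Xs0: "Xs j 0 = mk (\<nu>0 j) (R0 j)" for j
  proof -
    have "(0::complex) \<in> ball 0 (es j)" using S[of j] by simp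
    then have "norm (Xs j 0 - mk (\<nu>0 j) (R0 j)) \<le> Cs j * norm (0::complex)"
      using S[of j] by blast
    then show ?thesis by simp
  qed
  have V0f: "V (Inl j) 0 = Ai *v stack 0 (s j)" for j unfolding V_def using Xf0 by simp
  have V0s: "V (Inr j) 0 = R0 j" for j unfolding V_def using Xs0 by simp
  define P where "P = (\<lambda>z. (\<chi> i k. V (swp k) z $ i) :: complex^('n+'r)^('n+'r))"
  have Pmult: "P z *v y = (\<Sum>a\<in>UNIV. y $ Inl a *s V (Inr a) z) + (\<Sum>b\<in>UNIV. y $ Inr b *s V (Inl b) z)" for z y
  proof -
    have "P z *v y = (\<Sum>i\<in>UNIV. y $ i *s V (swp i) z)"
      by (simp add: P_def matrix_mult_sum column_def)
    also have "\<dots> = (\<Sum>a\<in>UNIV. y $ Inl a *s V (Inr a) z) + (\<Sum>b\<in>UNIV. y $ Inr b *s V (Inl b) z)"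
      by (simp add: sum_UNIV_plus)
    finally show ?thesis .
  qed
  have clin_vpart: "clin (vpart :: complex^('n+'r) \<Rightarrow> complex^'r)" by (rule clinI) simp_all
  have clin_upart: "clin (upart :: complex^('n+'r) \<Rightarrow> complex^'n)" by (rule clinI) simp_all
  have P0inv: "invertible (P 0)"
  proof (rule invertible_of_inj)
    fix y assume y: "P 0 *v y = 0"
    have QR: "Qm *v R0 a = 0" for a unfolding R0_def by (rule QR0_gen)
    have QV: "Qm *v (Ai *v stack 0 (s b)) = \<gamma> b *s stack 0 (s b)" for b using gs QV0_gen by blast
    have Qeq: "Qm *v (P 0 *v y) = (\<Sum>b\<in>UNIV. (y $ Inr b * \<gamma> b) *s stack 0 (s b))"
    proof -
      have "Qm *v (P 0 *v y) = (\<Sum>a\<in>UNIV. y $ Inl a *s (Qm *v R0 a)) + (\<Sum>b\<in>UNIV. y $ Inr b *s (Qm *v (Ai *v stack 0 (s b))))"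
        unfolding Pmult V0f V0s by (simp only: matrix_vector_right_distrib clin_sum[OF clin_matrix] mv_smult)
      also have "\<dots> = (\<Sum>b\<in>UNIV. (y $ Inr b * \<gamma> b) *s stack 0 (s b))"
        by (simp only: QR QV vector_smult_rzero sum.neutral_const add_0 vector_smult_assoc)
      finally show ?thesis .
    qed
    have h: "(\<Sum>b\<in>UNIV. (y $ Inr b * \<gamma> b) *s stack (0::complex^'n) (s b)) = 0"
      using Qeq y by simp
    have "vpart (\<Sum>b\<in>UNIV. (y $ Inr b * \<gamma> b) *s stack (0::complex^'n) (s b)) = (\<Sum>b\<in>UNIV. (y $ Inr b * \<gamma> b) *s s b)"
      by (simp add: clin_sum[OF clin_vpart])
    then have "(\<Sum>b\<in>UNIV. (y $ Inr b * \<gamma> b) *s s b) = 0" unfolding h by simp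
    then have "\<forall>b. y $ Inr b * \<gamma> b = 0" by (rule ind)
    then have yr: "y $ Inr b = 0" for b using gs by simp
    have "(\<Sum>a\<in>UNIV. y $ Inl a *s R0 a) = 0" using y unfolding Pmult V0s by (simp add: yr)
    then have "upart (\<Sum>a\<in>UNIV. y $ Inl a *s R0 a) = 0" by simp
    moreover have "upart (\<Sum>a\<in>UNIV. y $ Inl a *s R0 a) = (\<Sum>a\<in>UNIV. y $ Inl a *s cvec (rs a))"
      by (simp add: clin_sum[OF clin_upart] R0_def cvec_stack)
    ultimately have su: "(\<Sum>a\<in>UNIV. y $ Inl a *s cvec (rs a)) = 0" by simp
    have yl: "y $ Inl k = 0" for k
    proof -
      have "(cmat Lm *v (\<Sum>a\<in>UNIV. y $ Inl a *s cvec (rs a))) $ k = (\<Sum>a\<in>UNIV. y $ Inl a * (if k = a then 1 else 0))"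
        by (simp add: clin_sum[OF clin_matrix] mv_smult sum_component Lc_rs)
      also have "\<dots> = (\<Sum>a\<in>UNIV. if k = a then y $ Inl a else 0)" by (rule sum.cong) auto
      also have "\<dots> = y $ Inl k" by simp
      finally show ?thesis using su by simp
    qed
    show "y = 0" unfolding vec_eq_iff
    proof
      fix i show "y $ i = 0 $ i" by (cases i) (simp_all add: yl yr)
    qed
  qed
  have detcont: "continuous_on (ball 0 e1) (\<lambda>z. det (P z))"
  proof -
    have c: "continuous_on (ball 0 e1) (\<lambda>z. V k z $ i)" for k i
      by (rule holomorphic_on_imp_continuous_on[OF Vhol])
    show ?thesis unfolding det_def P_def by (simp, intro continuous_intros c)
  qed
  have "continuous (at 0) (\<lambda>z. det (P z))"
    using detcont e1pos by (simp add: continuous_on_interior)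
  moreover have "det (P 0) \<noteq> 0" using P0inv invertible_det_nz by blast
  ultimately obtain e2 where e2pos: "e2 > 0" and e2: "\<And>z. dist 0 z < e2 \<Longrightarrow> det (P z) \<noteq> 0"
    using continuous_at_avoid by blast
  define \<epsilon> where "\<epsilon> = min e1 e2"
  have \<epsilon>pos: "\<epsilon> > 0" unfolding \<epsilon>_def using e1pos e2pos by simp
  have sub\<epsilon>: "ball 0 \<epsilon> \<subseteq> ball 0 e1" unfolding \<epsilon>_def by auto
  have c1: "\<forall>k. \<mu> k analytic_on ball 0 \<epsilon>"
    using muhol sub\<epsilon> by (auto simp: analytic_on_open intro: holomorphic_on_subset)
  have c2: "\<forall>k i. (\<lambda>z. V k z $ i) analytic_on ball 0 \<epsilon>"
    using Vhol sub\<epsilon> by (auto simp: analytic_on_open intro: holomorphic_on_subset)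
  have c3: "\<forall>lam\<in>ball 0 \<epsilon>.
        (\<forall>k. (\<lambda>x. exp (\<mu> k lam * complex_of_real x) *s V k lam)
               \<in> odesols (cmat (blk fu fv gu gv)) (cmat (blk 0 0 qu qv)) lam) \<and>
        (\<forall>c. (\<forall>x. (\<Sum>k\<in>UNIV. c k *s (exp (\<mu> k lam * complex_of_real x) *s V k lam)) = 0)
              \<longrightarrow> (\<forall>k. c k = 0)) \<and>
        (\<forall>W\<in>odesols (cmat (blk fu fv gu gv)) (cmat (blk 0 0 qu qv)) lam.
           \<exists>c. \<forall>x. W x = (\<Sum>k\<in>UNIV. c k *s (exp (\<mu> k lam * complex_of_real x) *s V k lam)))"
  proof
    fix lam :: complex assume lam: "lam \<in> ball 0 \<epsilon>"
    have "det (P lam) \<noteq> 0" using lam e2 unfolding \<epsilon>_def by auto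
    then have Pi: "invertible (\<chi> i j. V (swp j) lam $ i)" using invertible_det_nz unfolding P_def by blast
    show "(\<forall>k. (\<lambda>x. exp (\<mu> k lam * complex_of_real x) *s V k lam)
               \<in> odesols (cmat (blk fu fv gu gv)) (cmat (blk 0 0 qu qv)) lam) \<and>
        (\<forall>c. (\<forall>x. (\<Sum>k\<in>UNIV. c k *s (exp (\<mu> k lam * complex_of_real x) *s V k lam)) = 0)
              \<longrightarrow> (\<forall>k. c k = 0)) \<and>
        (\<forall>W\<in>odesols (cmat (blk fu fv gu gv)) (cmat (blk 0 0 qu qv)) lam.
           \<exists>c. \<forall>x. W x = (\<Sum>k\<in>UNIV. c k *s (exp (\<mu> k lam * complex_of_real x) *s V k lam)))"
    proof (rule ode_basis[OF Am_inv _ bij_swp Pi])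
      fix k
      have "lam \<in> ball 0 e1" using lam sub\<epsilon> by blast
      then show "Qm *v V k lam - lam *s V k lam - \<mu> k lam *s (Am *v V k lam) = 0" by (rule eig)
    qed
  qed
  have c6: "\<forall>j. (\<lambda>z. \<mu> (Inl j) z - \<gamma> j) \<in> O[at 0](\<lambda>z. z)"
  proof
    fix j
    have "\<forall>z\<in>ball 0 (ef j). norm (\<mu> (Inl j) z - \<gamma> j) \<le> Cf j * norm z"
    proof
      fix z :: complex assume "z \<in> ball 0 (ef j)"
      then have "norm (Xf j z - mk (\<gamma> j) (Ai *v stack 0 (s j))) \<le> Cf j * norm z" using F[of j] by blast
      moreover have "norm (\<mu> (Inl j) z - \<gamma> j) \<le> norm (Xf j z - mk (\<gamma> j) (Ai *v stack 0 (s j)))"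
        using norm_mfst[of "Xf j z - mk (\<gamma> j) (Ai *v stack 0 (s j))"] by (simp add: \<mu>_def)
      ultimately show "norm (\<mu> (Inl j) z - \<gamma> j) \<le> Cf j * norm z" by linarith
    qed
    then show "(\<lambda>z. \<mu> (Inl j) z - \<gamma> j) \<in> O[at 0](\<lambda>z. z)" using F[of j] by (intro bigo_ball) auto
  qed
  have c7: "\<forall>j. (\<lambda>z. norm (V (Inl j) z - matrix_inv (cmat (blk fu fv gu gv)) *v stack 0 (s j)))
            \<in> O[at 0](\<lambda>z. norm z)"
  proof
    fix j
    have "\<forall>z\<in>ball 0 (ef j). norm (norm (V (Inl j) z - Ai *v stack 0 (s j))) \<le> Cf j * norm (norm z)"
    proof
      fix z :: complex assume "z \<in> ball 0 (ef j)"
      then have "norm (Xf j z - mk (\<gamma> j) (Ai *v stack 0 (s j))) \<le> Cf j * norm z" using F[of j] by blast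
      moreover have "norm (V (Inl j) z - Ai *v stack 0 (s j)) \<le> norm (Xf j z - mk (\<gamma> j) (Ai *v stack 0 (s j)))"
        using norm_msnd[of "Xf j z - mk (\<gamma> j) (Ai *v stack 0 (s j))"] by (simp add: V_def)
      ultimately show "norm (norm (V (Inl j) z - Ai *v stack 0 (s j))) \<le> Cf j * norm (norm z)" by simp
    qed
    then show "(\<lambda>z. norm (V (Inl j) z - matrix_inv (cmat (blk fu fv gu gv)) *v stack 0 (s j))) \<in> O[at 0](\<lambda>z. norm z)"
      using F[of j] by (intro bigo_ball) auto
  qed
  have c8: "\<forall>j. (\<lambda>z. \<mu> (Inr j) z - (- z / complex_of_real (a j)
               + z\<^sup>2 * complex_of_real (ls j \<bullet> (Bstar fu fv gu gv qu qv *v rs j))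
                 / complex_of_real (a j) ^ 3))
            \<in> O[at 0](\<lambda>z. z ^ 3)"
  proof
    fix j
    have "\<forall>z\<in>ball 0 (es j). norm (\<mu> (Inr j) z - (- z / complex_of_real (a j)
               + z\<^sup>2 * complex_of_real (ls j \<bullet> (Bstar fu fv gu gv qu qv *v rs j))
                 / complex_of_real (a j) ^ 3)) \<le> Cs j * norm (z ^ 3)"
    proof
      fix z :: complex assume z: "z \<in> ball 0 (es j)"
      have eqz: "\<mu> (Inr j) z - (- z / complex_of_real (a j)
               + z\<^sup>2 * complex_of_real (ls j \<bullet> (Bstar fu fv gu gv qu qv *v rs j))
                 / complex_of_real (a j) ^ 3) = z * (mfst (Xs j z) - \<nu>0 j - z * c\<nu> j)"
        unfolding \<mu>_def \<nu>0_def c\<nu>_def by (simp add: field_simps power2_eq_square)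
      have "norm (z * (mfst (Xs j z) - \<nu>0 j - z * c\<nu> j)) \<le> norm z * (Cs j * (norm z)^2)"
        unfolding norm_mult using S[of j] z by (intro mult_left_mono) auto
      also have "\<dots> = Cs j * norm (z ^ 3)" by (simp add: norm_power power3_eq_cube power2_eq_square norm_mult)
      finally show "norm (\<mu> (Inr j) z - (- z / complex_of_real (a j)
               + z\<^sup>2 * complex_of_real (ls j \<bullet> (Bstar fu fv gu gv qu qv *v rs j))
                 / complex_of_real (a j) ^ 3)) \<le> Cs j * norm (z ^ 3)" unfolding eqz .
    qed
    then show "(\<lambda>z. \<mu> (Inr j) z - (- z / complex_of_real (a j)
               + z\<^sup>2 * complex_of_real (ls j \<bullet> (Bstar fu fv gu gv qu qv *v rs j))
                 / complex_of_real (a j) ^ 3)) \<in> O[at 0](\<lambda>z. z ^ 3)"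
      using S[of j] by (intro bigo_ball) auto
  qed
  have c9: "\<forall>j. (\<lambda>z. norm (V (Inr j) z - cvec (stack (rs j) (- (matrix_inv qv ** qu) *v rs j))))
            \<in> O[at 0](\<lambda>z. norm z)"
  proof
    fix j
    have "\<forall>z\<in>ball 0 (es j). norm (norm (V (Inr j) z - R0 j)) \<le> Cs j * norm (norm z)"
    proof
      fix z :: complex assume "z \<in> ball 0 (es j)"
      then have "norm (Xs j z - mk (\<nu>0 j) (R0 j)) \<le> Cs j * norm z" using S[of j] by blast
      moreover have "norm (V (Inr j) z - R0 j) \<le> norm (Xs j z - mk (\<nu>0 j) (R0 j))"
        using norm_msnd[of "Xs j z - mk (\<nu>0 j) (R0 j)"] by (simp add: V_def)
      ultimately show "norm (norm (V (Inr j) z - R0 j)) \<le> Cs j * norm (norm z)" by simp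
    qed
    then show "(\<lambda>z. norm (V (Inr j) z - cvec (stack (rs j) (- (matrix_inv qv ** qu) *v rs j)))) \<in> O[at 0](\<lambda>z. norm z)"
      using S[of j] unfolding R0_def by (intro bigo_ball) auto
  qed
  have c5: "\<forall>j. \<gamma> j \<noteq> 0 \<and> s j \<noteq> 0 \<and>
          (rowblk (cmat qu) (cmat qv) ** matrix_inv (cmat (blk fu fv gu gv)) ** embI) *v s j
            = \<gamma> j *s s j" using gs .
  show ?thesis
    apply (rule exI[of _ \<epsilon>])
    apply (rule conjI[OF \<epsilon>pos])
    apply (rule exI[of _ \<mu>])
    apply (rule exI[of _ V])
    apply (rule exI[of _ \<gamma>])
    apply (rule exI[of _ s])
    apply (intro conjI c1 c2 c3 ginj c5 c6 c7 c8 c9)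
    done
qed


end
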